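(* Let $q$ be a prime power. For even $n$, let $\mathcal{G}_{n,q}$ be the number of self-dual codes of length $n$ over $\mathbb{F}_q$ and $\mathcal{C}_{n,q}$ the number of indecomposable self-dual codes of length $n$ over $\mathbb{F}_q$. Then $$\lim_{n\to\infty}\frac{\mathcal{C}_{n,q}}{\mathcal{G}_{n,q}}=1,$$ where the limit is taken over even lengths $n$ for which self-dual codes over $\mathbb{F}_q$ exist. Equivalently, for $n$ large, almost all self-dual codes of length $n$ over $\mathbb{F}_q$ are indecomposable (have Gorenstein defect $0$).
   Context: Codes are counted as distinct subspaces of $\mathbb{F}_q^n$. A code $\mathcal{C}\subseteq\mathbb{F}_q^n$ is self-dual if $\mathcal{C}=\mathcal{C}^\perp$ for the standard bilinear form. Codes are equivalent if they differ by a coordinate permutation; a code is decomposable if it is equivalent to a direct sum $\{(c_1,c_2):c_i\in\mathcal{C}_i\}$ of two nontrivial (nonzero, positive-length) codes, and indecomposable otherwise. For a self-dual code $\mathcal{C}\subseteq\mathbb{F}_q^{2k}$, its Gorenstein defect is $2k-\dim(\mathcal{C}^{(2)})-1$, where $\mathcal{C}^{(2)}$ is the span of all componentwise products of pairs of codewords. *)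

theory Defs
  imports "HOL-Library.FuncSet" "HOL-Combinatorics.Permutations" Complex_Main
begin

text \<open>Vectors of length n over a field: functions nat => 'a vanishing outside {..<n}.
  The field F_q is modelled by an arbitrary finite field type 'a, q = CARD('a).\<close>

definition vecs :: "nat \<Rightarrow> (nat \<Rightarrow> 'a::field) set" where
  "vecs n = {v. \<forall>i\<ge>n. v i = 0}"

definition is_code :: "nat \<Rightarrow> (nat \<Rightarrow> 'a::field) set \<Rightarrow> bool" where
  "is_code n C \<longleftrightarrow> C \<subseteq> vecs n \<and> (\<lambda>_. 0) \<in> C \<and>
     (\<forall>x\<in>C. \<forall>y\<in>C. (\<lambda>i. x i + y i) \<in> C) \<and>
     (\<forall>a. \<forall>x\<in>C. (\<lambda>i. a * x i) \<in> C)"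

definition dot :: "nat \<Rightarrow> (nat \<Rightarrow> 'a::field) \<Rightarrow> (nat \<Rightarrow> 'a) \<Rightarrow> 'a" where
  "dot n x y = (\<Sum>i<n. x i * y i)"

definition dual_code :: "nat \<Rightarrow> (nat \<Rightarrow> 'a::field) set \<Rightarrow> (nat \<Rightarrow> 'a) set" where
  "dual_code n C = {v \<in> vecs n. \<forall>c\<in>C. dot n v c = 0}"

definition self_dual :: "nat \<Rightarrow> (nat \<Rightarrow> 'a::field) set \<Rightarrow> bool" where
  "self_dual n C \<longleftrightarrow> is_code n C \<and> C = dual_code n C"

definition perm_code :: "(nat \<Rightarrow> nat) \<Rightarrow> (nat \<Rightarrow> 'a) set \<Rightarrow> (nat \<Rightarrow> 'a) set" where
  "perm_code \<sigma> C = (\<lambda>c. c \<circ> \<sigma>) ` C"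

definition direct_sum :: "nat \<Rightarrow> (nat \<Rightarrow> 'a) set \<Rightarrow> (nat \<Rightarrow> 'a) set \<Rightarrow> (nat \<Rightarrow> 'a) set" where
  "direct_sum n1 C1 C2 =
     {(\<lambda>i. if i < n1 then c1 i else c2 (i - n1)) | c1 c2. c1 \<in> C1 \<and> c2 \<in> C2}"

definition decomposable :: "nat \<Rightarrow> (nat \<Rightarrow> 'a::field) set \<Rightarrow> bool" where
  "decomposable n C \<longleftrightarrow>
     (\<exists>\<sigma> n1 n2 C1 C2. \<sigma> permutes {..<n} \<and> 0 < n1 \<and> 0 < n2 \<and> n1 + n2 = n \<and>
        is_code n1 C1 \<and> is_code n2 C2 \<and> C1 \<noteq> {\<lambda>_. 0} \<and> C2 \<noteq> {\<lambda>_. 0} \<and>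
        perm_code \<sigma> C = direct_sum n1 C1 C2)"

definition indecomposable :: "nat \<Rightarrow> (nat \<Rightarrow> 'a::field) set \<Rightarrow> bool" where
  "indecomposable n C \<longleftrightarrow> \<not> decomposable n C"

definition num_sd :: "'a::field itself \<Rightarrow> nat \<Rightarrow> nat" where
  "num_sd _ n = card {C :: (nat \<Rightarrow> 'a) set. self_dual n C}"

definition num_indec_sd :: "'a::field itself \<Rightarrow> nat \<Rightarrow> nat" where
  "num_indec_sd _ n = card {C :: (nat \<Rightarrow> 'a) set. self_dual n C \<and> indecomposable n C}"

end

theory Submission
  imports Defs "HOL-Real_Asymp.Real_Asymp"
begin


lemma card_le_fiber:
  assumes "finite A" and "\<And>y. y \<in> f ` A \<Longrightarrow> card {x\<in>A. f x = y} \<le> K"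
  shows "card A \<le> K * card (f ` A)"
proof -
  have "card A = card (\<Union>y\<in>f ` A. {x\<in>A. f x = y})" by (rule arg_cong[where f=card]) auto
  also have "\<dots> \<le> (\<Sum>y\<in>f ` A. card {x\<in>A. f x = y})"
    by (rule card_UN_le) (use assms(1) in simp)
  also have "\<dots> \<le> (\<Sum>y\<in>f ` A. K)" by (intro sum_mono assms(2))
  finally show ?thesis by (simp add: mult.commute)
qed

lemma card_ge_fiber:
  assumes "finite A" and "\<And>y. y \<in> B \<Longrightarrow> K \<le> card {x\<in>A. f x = y}"
  shows "K * card B \<le> card A"
proof (cases "finite B")
  case False then show ?thesis by simp
next
  case True
  have "K * card B = (\<Sum>y\<in>B. K)" by simp
  also have "\<dots> \<le> (\<Sum>y\<in>B. card {x\<in>A. f x = y})" by (intro sum_mono assms(2))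
  also have "\<dots> = card (\<Union>y\<in>B. {x\<in>A. f x = y})"
    using True by (subst card_UN_disjoint) (use assms(1) in auto)
  also have "\<dots> \<le> card A" by (rule card_mono) (use assms(1) in auto)
  finally show ?thesis .
qed

lemma vecs_Suc: "vecs (Suc n) = (\<lambda>(v,c). v(n:=c)) ` (vecs n \<times> (UNIV::'a::field set))"
proof (rule set_eqI, rule iffI)
  fix x :: "nat \<Rightarrow> 'a" assume x: "x \<in> vecs (Suc n)"
  have "x(n:=0) \<in> vecs n" using x unfolding vecs_def by (auto simp: Suc_le_eq)
  then show "x \<in> (\<lambda>(v,c). v(n:=c)) ` (vecs n \<times> UNIV)"
    by (intro image_eqI[of _ _ "(x(n:=0), x n)"]) auto
next
  fix x :: "nat \<Rightarrow> 'a" assume "x \<in> (\<lambda>(v,c). v(n:=c)) ` (vecs n \<times> UNIV)"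
  then show "x \<in> vecs (Suc n)" unfolding vecs_def by auto
qed

lemma vecsD: "v \<in> vecs n \<Longrightarrow> n \<le> i \<Longrightarrow> v i = 0" unfolding vecs_def by auto
lemma inj_vecs_Suc: "inj_on (\<lambda>(v,c). v(n:=c)) (vecs n \<times> (UNIV::'a::field set))"
proof (rule inj_onI, clarify)
  fix v w :: "nat \<Rightarrow> 'a" and c d
  assume "v \<in> vecs n" "w \<in> vecs n" "v(n := c) = w(n := d)"
  then have "c = d" by (metis fun_upd_same)
  moreover have "v i = w i" for i
  proof (cases "i = n")
    case True then show ?thesis using \<open>v \<in> vecs n\<close> \<open>w \<in> vecs n\<close> by (simp add: vecsD)
  next
    case False then show ?thesis using \<open>v(n := c) = w(n := d)\<close> by (metis fun_upd_other)
  qed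
  ultimately show "v = w \<and> c = d" by auto
qed

lemma finite_vecs: "finite (vecs n :: (nat \<Rightarrow> 'a::{finite,field}) set)"
proof (induction n)
  case 0
  have "vecs 0 = {(\<lambda>_. 0) :: nat \<Rightarrow> 'a}" unfolding vecs_def by auto
  then show ?case by simp
next
  case (Suc n)
  then show ?case unfolding vecs_Suc by simp
qed

lemma card_vecs: "card (vecs n :: (nat \<Rightarrow> 'a) set) = card (UNIV::'a::{finite,field} set) ^ n"
proof (induction n)
  case 0
  have "vecs 0 = {(\<lambda>_. 0) :: nat \<Rightarrow> 'a}" unfolding vecs_def by auto
  then show ?case by simp
next
  case (Suc n)
  have "card (vecs (Suc n) :: (nat \<Rightarrow> 'a) set) = card ((vecs n :: (nat \<Rightarrow> 'a) set) \<times> (UNIV::'a set))"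
    unfolding vecs_Suc by (rule card_image[OF inj_vecs_Suc])
  then show ?case using Suc by (simp add: card_cartesian_product)
qed

lemma vecs_0: "vecs 0 = {\<lambda>_. 0}" unfolding vecs_def by auto

lemma vecs_mono: "v \<in> vecs n \<Longrightarrow> n \<le> m \<Longrightarrow> v \<in> vecs m" unfolding vecs_def by auto

lemma dot_commute: "dot n x y = dot n y x" unfolding dot_def by (simp add: mult.commute)

lemma dot_add_left: "dot n (\<lambda>i. x i + y i) z = dot n x z + dot n y z"
  unfolding dot_def by (simp add: distrib_right sum.distrib)

lemma dot_add_right: "dot n z (\<lambda>i. x i + y i) = dot n z x + dot n z y"
  unfolding dot_def by (simp add: distrib_left sum.distrib)

lemma dot_diff_left: "dot n (\<lambda>i. x i - y i) z = dot n x z - dot n y z"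
  unfolding dot_def by (simp add: left_diff_distrib sum_subtractf)

lemma dot_diff_right: "dot n z (\<lambda>i. x i - y i) = dot n z x - dot n z y"
  unfolding dot_def by (simp add: right_diff_distrib sum_subtractf)

lemma dot_scale_left: "dot n (\<lambda>i. c * x i) z = c * dot n x z"
  unfolding dot_def by (simp add: sum_distrib_left mult.assoc)

lemma dot_scale_right: "dot n z (\<lambda>i. c * x i) = c * dot n z x"
  unfolding dot_def by (simp add: sum_distrib_left mult.left_commute)

lemma dot_sum_left: "dot n (\<lambda>i. \<Sum>j\<in>J. f j i) z = (\<Sum>j\<in>J. dot n (f j) z)"
  unfolding dot_def by (simp add: sum_distrib_right sum.swap[of _ J])

lemma dot_sum_right: "dot n z (\<lambda>i. \<Sum>j\<in>J. f j i) = (\<Sum>j\<in>J. dot n z (f j))"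
  unfolding dot_def by (simp add: sum_distrib_left sum.swap[of _ J])

lemma dot_zero_left[simp]: "dot n (\<lambda>_. 0) z = 0" unfolding dot_def by simp
lemma dot_zero_right[simp]: "dot n z (\<lambda>_. 0) = 0" unfolding dot_def by simp

lemma dot_Suc: "dot (Suc n) x y = dot n x y + x n * y n" unfolding dot_def by simp

lemma dot_cong: "(\<And>i. i < n \<Longrightarrow> x i = x' i) \<Longrightarrow> (\<And>i. i < n \<Longrightarrow> y i = y' i) \<Longrightarrow>
   dot n x y = dot n x' y'" unfolding dot_def by (rule sum.cong) auto

lemma dot_vecs_mono: "x \<in> vecs n \<Longrightarrow> n \<le> m \<Longrightarrow> dot m x y = dot n x y"
  unfolding dot_def
proof -
  assume x: "x \<in> vecs n" and nm: "n \<le> m"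
  have "(\<Sum>i<m. x i * y i) = (\<Sum>i<n. x i * y i) + (\<Sum>i\<in>{n..<m}. x i * y i)"
    using nm by (metis (no_types, lifting) lessThan_atLeast0 sum.atLeastLessThan_concat zero_le)
  also have "(\<Sum>i\<in>{n..<m}. x i * y i) = 0" using x by (auto simp: vecsD intro!: sum.neutral)
  finally show "(\<Sum>i<m. x i * y i) = (\<Sum>i<n. x i * y i)" by simp
qed

lemma dot_split: "dot (m + s) x y = dot m x y + dot s (\<lambda>i. x (m + i)) (\<lambda>i. y (m + i))"
  unfolding dot_def
proof -
  have "(\<Sum>i<m+s. x i * y i) = (\<Sum>i<m. x i * y i) + (\<Sum>i\<in>{m..<m+s}. x i * y i)"
    by (metis (no_types, lifting) lessThan_atLeast0 sum.atLeastLessThan_concat zero_le le_add1)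
  also have "(\<Sum>i\<in>{m..<m+s}. x i * y i) = (\<Sum>i<s. x (m+i) * y (m+i))"
    using sum.shift_bounds_nat_ivl[of "\<lambda>i. x i * y i" 0 m s]
    by (simp add: lessThan_atLeast0 add.commute)
  finally show "(\<Sum>i<m+s. x i * y i) = (\<Sum>i<m. x i * y i) + (\<Sum>i<s. x (m+i) * y (m+i))" .
qed

lemma is_codeD:
  assumes "is_code n C"
  shows "C \<subseteq> vecs n" "(\<lambda>_. 0) \<in> C" "\<And>x y. x \<in> C \<Longrightarrow> y \<in> C \<Longrightarrow> (\<lambda>i. x i + y i) \<in> C"
    "\<And>a x. x \<in> C \<Longrightarrow> (\<lambda>i. a * x i) \<in> C"
  using assms unfolding is_code_def by auto

lemma code_diff: "is_code n C \<Longrightarrow> x \<in> C \<Longrightarrow> y \<in> C \<Longrightarrow> (\<lambda>i. x i - y i) \<in> C"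
proof -
  assume C: "is_code n C" "x \<in> C" "y \<in> C"
  have "(\<lambda>i. (-1) * y i) \<in> C" using is_codeD(4)[OF C(1) C(3)] .
  from is_codeD(3)[OF C(1) C(2) this] show ?thesis by simp
qed

lemma code_lincomb: "is_code n C \<Longrightarrow> x \<in> C \<Longrightarrow> y \<in> C \<Longrightarrow> (\<lambda>i. a * x i + b * y i) \<in> C"
  by (simp add: is_codeD)

lemma finite_code: "is_code n (C :: (nat \<Rightarrow> 'a::{finite,field}) set) \<Longrightarrow> finite C"
  using finite_subset[OF is_codeD(1) finite_vecs] .

lemma dual_code_is_code: "is_code n (dual_code n C)"
  unfolding is_code_def dual_code_def
proof (intro conjI ballI allI)
  show "(\<lambda>_. 0) \<in> {v \<in> vecs n. \<forall>c\<in>C. dot n v c = 0}" by (simp add: vecs_def)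
  fix x y assume "x \<in> {v \<in> vecs n. \<forall>c\<in>C. dot n v c = 0}" "y \<in> {v \<in> vecs n. \<forall>c\<in>C. dot n v c = 0}"
  then show "(\<lambda>i. x i + y i) \<in> {v \<in> vecs n. \<forall>c\<in>C. dot n v c = 0}"
    by (simp add: dot_add_left vecs_def)
next
  fix a x assume "x \<in> {v \<in> vecs n. \<forall>c\<in>C. dot n v c = 0}"
  then show "(\<lambda>i. a * x i) \<in> {v \<in> vecs n. \<forall>c\<in>C. dot n v c = 0}"
    by (simp add: dot_scale_left vecs_def)
qed auto



lemma vecs_Suc_zero: assumes "v \<in> vecs (Suc n)" "v n = 0" shows "v \<in> vecs n"
  unfolding vecs_def
proof (intro CollectI allI impI)
  fix i assume "n \<le> i" then show "v i = 0" by (cases "i = n") (use assms in \<open>auto simp: vecsD\<close>)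
qed

lemma vecs_upd: "v \<in> vecs (Suc n) \<Longrightarrow> v(n:=0) \<in> vecs n"
  by (rule vecs_Suc_zero) (auto simp: vecs_def)

lemma vecs_upd2: "v \<in> vecs n \<Longrightarrow> v(n:=t) \<in> vecs (Suc n)"
  by (auto simp: vecs_def)

lemma dot_Suc_upd: "dot (Suc n) (w(n:=t)) m = dot n w m + t * m n"
proof -
  have "dot n (w(n:=t)) m = dot n w m" by (rule dot_cong) auto
  then show ?thesis by (simp add: dot_Suc)
qed

lemma code_short: "is_code (Suc n) M \<Longrightarrow> is_code n {m\<in>M. m n = 0}"
  unfolding is_code_def using vecs_Suc_zero by auto

lemma code_norm:
  assumes M: "is_code n M" and z: "z \<in> M" "z k \<noteq> 0"
  shows "(\<lambda>i. inverse (z k) * z i) \<in> M" "(\<lambda>i. inverse (z k) * z i) k = 1"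
  using is_codeD(4)[OF M z(1)] z(2) by auto

lemma code_split_bij:
  assumes M: "is_code (Suc n) M" and z: "z \<in> M" "z n = 1"
  shows "bij_betw (\<lambda>(m0,c). \<lambda>i. m0 i + c * z i) ({m\<in>M. m n = 0} \<times> UNIV) M"
proof (rule bij_betw_byWitness[where f'="\<lambda>m. (\<lambda>i. m i - m n * z i, m n)"])
  show "\<forall>a\<in>{m \<in> M. m n = 0} \<times> UNIV. (\<lambda>m. (\<lambda>i. m i - m n * z i, m n)) ((\<lambda>(m0, c) i. m0 i + c * z i) a) = a"
    using z by auto
  show "\<forall>a'\<in>M. (\<lambda>(m0, c) i. m0 i + c * z i) ((\<lambda>m. (\<lambda>i. m i - m n * z i, m n)) a') = a'"
    by auto
  show "(\<lambda>(m0, c) i. m0 i + c * z i) ` ({m \<in> M. m n = 0} \<times> UNIV) \<subseteq> M"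
    using M z by (auto intro!: code_lincomb[where a=1, simplified])
  show "(\<lambda>m. (\<lambda>i. m i - m n * z i, m n)) ` M \<subseteq> {m \<in> M. m n = 0} \<times> UNIV"
  proof (rule image_subsetI)
    fix m assume "m \<in> M"
    then have "(\<lambda>i. m i - m n * z i) \<in> M" using code_lincomb[OF M, of m z 1 "- m n"] z by simp
    then show "(\<lambda>i. m i - m n * z i, m n) \<in> {m \<in> M. m n = 0} \<times> UNIV" using z by simp
  qed
qed

lemma code_split_card:
  fixes M :: "(nat \<Rightarrow> 'a::{finite,field}) set"
  assumes M: "is_code (Suc n) M" and z: "z \<in> M" "z n = 1"
  shows "card M = card (UNIV::'a set) * card {m\<in>M. m n = 0}"
  using bij_betw_same_card[OF code_split_bij[OF assms]] by (simp add: card_cartesian_product mult.commute)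

lemma code_dim:
  fixes M :: "(nat \<Rightarrow> 'a::{finite,field}) set"
  assumes "is_code n M"
  shows "\<exists>d\<le>n. card M = card (UNIV::'a set) ^ d \<and> card (dual_code n M) = card (UNIV::'a set) ^ (n - d)"
  using assms
proof (induction n arbitrary: M)
  case 0
  then have "M = {\<lambda>_. 0}" using is_codeD[OF 0] vecs_0 by auto
  moreover have "dual_code 0 M = {\<lambda>_. 0}" unfolding dual_code_def vecs_0 by auto
  ultimately show ?case by simp
next
  case (Suc n)
  let ?q = "card (UNIV::'a set)"
  define M0 where "M0 = {m\<in>M. m n = 0}"
  have M0: "is_code n M0" unfolding M0_def by (rule code_short[OF Suc.prems])
  from Suc.IH[OF M0] obtain d where d: "d \<le> n" "card M0 = ?q ^ d" "card (dual_code n M0) = ?q ^ (n - d)"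
    by blast
  show ?case
  proof (cases "\<exists>z\<in>M. z n \<noteq> 0")
    case True
    then obtain z0 where z0: "z0 \<in> M" "z0 n \<noteq> 0" by blast
    define z where "z = (\<lambda>i. inverse (z0 n) * z0 i)"
    have z: "z \<in> M" "z n = 1" using code_norm[OF Suc.prems z0] unfolding z_def by auto
    have cM: "card M = ?q * card M0" unfolding M0_def by (rule code_split_card[OF Suc.prems z])
    have bij: "bij_betw (\<lambda>w. w(n := - dot n w z)) (dual_code n M0) (dual_code (Suc n) M)"
    proof (rule bij_betw_byWitness[where f'="\<lambda>v. v(n:=0)"])
      show "\<forall>a\<in>dual_code n M0. (a(n := - dot n a z))(n := 0) = a"
        by (auto simp: dual_code_def vecsD)
      show "\<forall>a'\<in>dual_code (Suc n) M. (a'(n := 0))(n := - dot n (a'(n := 0)) z) = a'"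
      proof
        fix v assume v: "v \<in> dual_code (Suc n) M"
        have "dot (Suc n) v z = 0" using v z unfolding dual_code_def by auto
        hence "v n = - dot n v z" using z by (simp add: dot_Suc eq_neg_iff_add_eq_0 add.commute)
        moreover have "dot n (v(n:=0)) z = dot n v z" by (rule dot_cong) auto
        ultimately show "(v(n := 0))(n := - dot n (v(n := 0)) z) = v" by auto
      qed
      show "(\<lambda>w. w(n := - dot n w z)) ` dual_code n M0 \<subseteq> dual_code (Suc n) M"
      proof clarify
        fix w assume w: "w \<in> dual_code n M0"
        show "w(n := - dot n w z) \<in> dual_code (Suc n) M"
          unfolding dual_code_def
        proof (intro CollectI conjI ballI)
          show "w(n := - dot n w z) \<in> vecs (Suc n)" using w by (auto simp: dual_code_def intro: vecs_upd2)
          fix m assume m: "m \<in> M"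
          define m0 where "m0 = (\<lambda>i. m i - m n * z i)"
          have m0: "m0 \<in> M0" unfolding M0_def m0_def
            using code_lincomb[OF Suc.prems m z(1), of 1 "- m n"] z by simp
          have "dot n w m0 = 0" using w m0 by (auto simp: dual_code_def dot_commute)
          hence "dot n w m = m n * dot n w z" unfolding m0_def
            by (simp add: dot_diff_right dot_scale_right)
          then show "dot (Suc n) (w(n := - dot n w z)) m = 0"
            by (simp add: dot_Suc_upd mult.commute)
        qed
      qed
      show "(\<lambda>v. v(n := 0)) ` dual_code (Suc n) M \<subseteq> dual_code n M0"
      proof (rule image_subsetI)
        fix v assume v: "v \<in> dual_code (Suc n) M"
        show "v(n := 0) \<in> dual_code n M0" unfolding dual_code_def
        proof (intro CollectI conjI ballI)
          show "v(n := 0) \<in> vecs n" using v unfolding dual_code_def by (auto intro: vecs_upd)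
          fix m assume m: "m \<in> M0"
          have "dot (Suc n) v m = 0" using v m unfolding dual_code_def M0_def by auto
          moreover have "dot n (v(n:=0)) m = dot n v m" by (rule dot_cong) auto
          ultimately show "dot n (v(n := 0)) m = 0" using m unfolding M0_def by (simp add: dot_Suc)
        qed
      qed
    qed
    have "card (dual_code (Suc n) M) = ?q ^ (n - d)"
      using bij_betw_same_card[OF bij] d by simp
    then show ?thesis using cM d by (intro exI[of _ "Suc d"]) auto
  next
    case False
    hence MM0: "M0 = M" unfolding M0_def by auto
    have bij: "bij_betw (\<lambda>(w,t). w(n := t)) (dual_code n M0 \<times> UNIV) (dual_code (Suc n) M)"
    proof (rule bij_betw_byWitness[where f'="\<lambda>v. (v(n:=0), v n)"])
      show "\<forall>a\<in>dual_code n M0 \<times> UNIV. (\<lambda>v. (v(n := 0), v n)) ((\<lambda>(w, t). w(n := t)) a) = a"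
        by (auto simp: dual_code_def vecsD)
      show "\<forall>a'\<in>dual_code (Suc n) M. (\<lambda>(w, t). w(n := t)) ((\<lambda>v. (v(n := 0), v n)) a') = a'"
        by auto
      show "(\<lambda>(w, t). w(n := t)) ` (dual_code n M0 \<times> UNIV) \<subseteq> dual_code (Suc n) M"
      proof clarify
        fix w t assume w: "w \<in> dual_code n M0"
        show "w(n := t) \<in> dual_code (Suc n) M" unfolding dual_code_def
        proof (intro CollectI conjI ballI)
          show "w(n := t) \<in> vecs (Suc n)" using w by (auto simp: dual_code_def intro: vecs_upd2)
          fix m assume m: "m \<in> M"
          have "m n = 0" using m False by auto
          moreover have "dot n w m = 0" using w m MM0 unfolding dual_code_def by auto
          ultimately show "dot (Suc n) (w(n := t)) m = 0" by (simp add: dot_Suc_upd)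
        qed
      qed
      show "(\<lambda>v. (v(n := 0), v n)) ` dual_code (Suc n) M \<subseteq> dual_code n M0 \<times> UNIV"
      proof (rule image_subsetI)
        fix v assume v: "v \<in> dual_code (Suc n) M"
        have "v(n := 0) \<in> dual_code n M0" unfolding dual_code_def
        proof (intro CollectI conjI ballI)
          show "v(n := 0) \<in> vecs n" using v unfolding dual_code_def by (auto intro: vecs_upd)
          fix m assume m: "m \<in> M0"
          have "dot (Suc n) v m = 0" using v m unfolding dual_code_def M0_def by auto
          moreover have "dot n (v(n:=0)) m = dot n v m" by (rule dot_cong) auto
          ultimately show "dot n (v(n := 0)) m = 0" using m unfolding M0_def by (simp add: dot_Suc)
        qed
        then show "(v(n := 0), v n) \<in> dual_code n M0 \<times> UNIV" by simp
      qed
    qed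
    have "card (dual_code (Suc n) M) = ?q ^ (n - d) * ?q"
      using bij_betw_same_card[OF bij] d by (simp add: card_cartesian_product)
    then show ?thesis using MM0 d by (intro exI[of _ d]) (auto simp: Suc_diff_le)
  qed
qed



lemma card_UNIV_ge2: "2 \<le> card (UNIV::'a::{finite,field} set)"
proof -
  have "{0, 1::'a} \<subseteq> UNIV" by simp
  hence "card {0, 1::'a} \<le> card (UNIV::'a set)" by (rule card_mono[OF finite])
  then show ?thesis by simp
qed

lemma self_dual_card:
  fixes M :: "(nat \<Rightarrow> 'a::{finite,field}) set"
  assumes "self_dual n M"
  shows "even n" "card M = card (UNIV::'a set) ^ (n div 2)"
proof -
  let ?q = "card (UNIV::'a set)"
  have c: "is_code n M" "M = dual_code n M" using assms unfolding self_dual_def by auto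
  from code_dim[OF c(1)] obtain d where d: "d \<le> n" "card M = ?q ^ d" "card (dual_code n M) = ?q ^ (n - d)"
    by blast
  have "?q ^ d = ?q ^ (n - d)" using d c(2) by simp
  hence "d = n - d" using card_UNIV_ge2[where 'a='a] by (simp add: power_inject_exp)
  hence "n = 2 * d" using d(1) by simp
  then show "even n" "card M = ?q ^ (n div 2)" using d by auto
qed

definition codes_card :: "nat \<Rightarrow> nat \<Rightarrow> (nat \<Rightarrow> 'a::{finite,field}) set set" where
  "codes_card m d = {S. is_code m S \<and> card S = card (UNIV::'a set) ^ d}"

lemma finite_codes: "finite {S :: (nat \<Rightarrow> 'a::{finite,field}) set. is_code m S}"
proof -
  have "{S :: (nat \<Rightarrow> 'a) set. is_code m S} \<subseteq> Pow (vecs m)" using is_codeD(1) by auto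
  then show ?thesis using finite_vecs finite_subset by blast
qed

lemma finite_codes_card: "finite (codes_card m d :: (nat \<Rightarrow> 'a::{finite,field}) set set)"
  unfolding codes_card_def by (rule finite_subset[OF _ finite_codes]) auto

definition cosets :: "nat \<Rightarrow> (nat \<Rightarrow> 'a::field) set \<Rightarrow> (nat \<Rightarrow> 'a) set set" where
  "cosets m S0 = (\<lambda>z. (\<lambda>s. \<lambda>i. z i + s i) ` S0) ` {z \<in> vecs (Suc m). z m = 1}"

lemma card_W:
  "card {z \<in> vecs (Suc m). z m = (1::'a::{finite,field})} = card (UNIV::'a set) ^ m"
proof -
  have "bij_betw (\<lambda>w. w(m:=1)) (vecs m) {z \<in> vecs (Suc m). z m = (1::'a)}"
    by (rule bij_betw_byWitness[where f'="\<lambda>z. z(m:=0)"]) (auto simp: vecsD vecs_upd vecs_upd2)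
  from bij_betw_same_card[OF this] show ?thesis by (simp add: card_vecs)
qed

lemma cosets_card:
  fixes S0 :: "(nat \<Rightarrow> 'a::{finite,field}) set"
  assumes S0: "is_code m S0"
  shows "card (cosets m S0) * card S0 = card (UNIV::'a set) ^ m"
proof -
  let ?W = "{z \<in> vecs (Suc m). z m = (1::'a)}"
  have fW: "finite ?W" using finite_vecs[of "Suc m"] by (rule finite_subset[rotated]) auto
  have U: "\<Union>(cosets m S0) = ?W"
  proof
    show "\<Union>(cosets m S0) \<subseteq> ?W"
    proof
      fix x assume "x \<in> \<Union>(cosets m S0)"
      then obtain z s where zs: "z \<in> ?W" "s \<in> S0" "x = (\<lambda>i. z i + s i)" unfolding cosets_def by auto
      have "s \<in> vecs m" using zs(2) is_codeD(1)[OF S0] by auto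
      then show "x \<in> ?W" using zs by (auto simp: vecs_def)
    qed
    show "?W \<subseteq> \<Union>(cosets m S0)"
    proof
      fix z assume z: "z \<in> ?W"
      have "z \<in> (\<lambda>s. \<lambda>i. z i + s i) ` S0"
        by (rule image_eqI[where x="\<lambda>_. 0"]) (use is_codeD(2)[OF S0] in auto)
      then show "z \<in> \<Union>(cosets m S0)" using z unfolding cosets_def by blast
    qed
  qed
  have "card S0 * card (cosets m S0) = card (\<Union>(cosets m S0))"
  proof (rule card_partition)
    show "finite (cosets m S0)" unfolding cosets_def using fW by simp
    show "finite (\<Union>(cosets m S0))" using U fW by simp
    show "card c = card S0" if "c \<in> cosets m S0" for c
    proof -
      note \<open>c \<in> cosets m S0\<close>
      then obtain z where c: "c = (\<lambda>s. \<lambda>i. z i + s i) ` S0" unfolding cosets_def by auto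
      have "inj_on (\<lambda>s. \<lambda>i. z i + s i) S0" by (auto simp: inj_on_def fun_eq_iff)
      then show "card c = card S0" using c card_image by blast
    qed
    show "c1 \<inter> c2 = {}" if c1: "c1 \<in> cosets m S0" and c2: "c2 \<in> cosets m S0" and ne: "c1 \<noteq> c2" for c1 c2
    proof -
      obtain z1 where z1: "c1 = (\<lambda>s. \<lambda>i. z1 i + s i) ` S0" using c1 unfolding cosets_def by auto
      obtain z2 where z2: "c2 = (\<lambda>s. \<lambda>i. z2 i + s i) ` S0" using c2 unfolding cosets_def by auto
      show "c1 \<inter> c2 = {}"
      proof (rule ccontr)
        assume "c1 \<inter> c2 \<noteq> {}"
        then obtain s1 s2 where s: "s1 \<in> S0" "s2 \<in> S0" "(\<lambda>i. z1 i + s1 i) = (\<lambda>i. z2 i + s2 i)"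
          using z1 z2 by auto
        have "c1 \<subseteq> c2" if h: "s1 \<in> S0" "s2 \<in> S0" "(\<lambda>i. z1 i + s1 i) = (\<lambda>i. z2 i + s2 i)"
          "c1 = (\<lambda>s. \<lambda>i. z1 i + s i) ` S0" "c2 = (\<lambda>s. \<lambda>i. z2 i + s i) ` S0" for z1 z2 s1 s2 c1 c2
        proof
          fix x assume "x \<in> c1"
          then obtain s where s: "s \<in> S0" "x = (\<lambda>i. z1 i + s i)" using h(4) by auto
          have e: "z1 i = z2 i + s2 i - s1 i" for i
          proof -
            have "z1 i + s1 i = z2 i + s2 i" using fun_cong[OF h(3), of i] by simp
            then show ?thesis by (simp add: eq_diff_eq)
          qed
          have t: "(\<lambda>i. (\<lambda>i. s2 i - s1 i) i + s i) \<in> S0"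
            using code_diff[OF S0 h(2) h(1)] s(1) is_codeD(3)[OF S0] by blast
          have "x = (\<lambda>i. z2 i + (\<lambda>i. (\<lambda>i. s2 i - s1 i) i + s i) i)" using s e by (auto simp: algebra_simps)
          then show "x \<in> c2" unfolding h(5) by (rule image_eqI[OF _ t])
        qed
        from this[OF s z1 z2] this[OF s(2) s(1) s(3)[symmetric] z2 z1] ne show False by auto
      qed
    qed
  qed
  then show ?thesis using U card_W[of m] by (simp add: mult.commute)
qed

lemma grassmann:
  "card (codes_card m d :: (nat \<Rightarrow> 'a::{finite,field}) set set) * card (UNIV::'a set) ^ (d*d)
     \<le> 2 ^ m * card (UNIV::'a set) ^ (d*m + d)"
proof (induction m arbitrary: d)
  case 0
  let ?q = "card (UNIV::'a set)"
  have sub: "codes_card 0 d \<subseteq> {{\<lambda>_. 0 :: 'a}}" unfolding codes_card_def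
    using is_codeD(1,2) vecs_0 by fastforce
  have c: "card (codes_card 0 d :: (nat \<Rightarrow> 'a) set set) \<le> 1"
    using card_mono[OF _ sub] by simp
  show ?case
  proof (cases "d = 0")
    case True then show ?thesis using c by simp
  next
    case False
    have "codes_card 0 d = ({} :: (nat \<Rightarrow> 'a) set set)"
    proof (rule ccontr)
      assume "codes_card 0 d \<noteq> ({} :: (nat \<Rightarrow> 'a) set set)"
      then obtain S :: "(nat \<Rightarrow> 'a) set" where S: "is_code 0 S" "card S = ?q ^ d" unfolding codes_card_def by auto
      have "S = {\<lambda>_. 0}" using is_codeD(1,2)[OF S(1)] vecs_0 by auto
      hence "?q ^ d = 1" using S by simp
      thus False using False card_UNIV_ge2[where 'a='a] by simp
    qed
    then show ?thesis by simp
  qed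
next
  case (Suc m)
  let ?q = "card (UNIV::'a set)"
  let ?X = "codes_card (Suc m) d :: (nat \<Rightarrow> 'a) set set"
  let ?X1 = "{S\<in>?X. \<forall>s\<in>S. s m = 0}"
  let ?X2 = "{S\<in>?X. \<not>(\<forall>s\<in>S. s m = 0)}"
  have fX: "finite ?X" by (rule finite_codes_card)
  have "?X = ?X1 \<union> ?X2" by auto
  hence split: "card ?X = card ?X1 + card ?X2"
    using card_Un_disjoint[of ?X1 ?X2] fX by auto
  have X1: "?X1 \<subseteq> codes_card m d"
  proof (rule subsetI)
    fix S assume "S \<in> ?X1"
    hence S: "is_code (Suc m) S" "card S = ?q ^ d" "\<forall>s\<in>S. s m = 0" unfolding codes_card_def by auto
    have "S = {s\<in>S. s m = 0}" using S(3) by auto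
    then have "is_code m S" using code_short[OF S(1)] by simp
    then show "S \<in> codes_card m d" using S unfolding codes_card_def by simp
  qed
  have c1: "card ?X1 \<le> card (codes_card m d :: (nat \<Rightarrow> 'a) set set)"
    by (rule card_mono[OF finite_codes_card X1])
  have bound1: "card ?X1 * ?q ^ (d*d) \<le> 2 ^ m * ?q ^ (d * Suc m + d)"
  proof -
    have "card ?X1 * ?q ^ (d*d) \<le> card (codes_card m d :: (nat \<Rightarrow> 'a) set set) * ?q ^ (d*d)"
      using c1 by simp
    also have "\<dots> \<le> 2 ^ m * ?q ^ (d * m + d)" by (rule Suc.IH)
    also have "\<dots> \<le> 2 ^ m * ?q ^ (d * Suc m + d)"
      using card_UNIV_ge2[where 'a='a] by (intro mult_le_mono2 power_increasing) auto
    finally show ?thesis .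
  qed
  have bound2: "card ?X2 * ?q ^ (d*d) \<le> 2 ^ m * ?q ^ (d * Suc m + d)"
  proof (cases d)
    case 0
    have "?X2 = {}"
    proof (rule ccontr)
      assume "?X2 \<noteq> {}"
      then obtain S :: "(nat \<Rightarrow> 'a) set" and s where S: "is_code (Suc m) S" "card S = 1" "s \<in> S" "s m \<noteq> 0"
        unfolding codes_card_def using 0 by auto
      have "(\<lambda>_. 0) \<in> S" using is_codeD(2)[OF S(1)] .
      from card_1_singletonE[OF S(2)] obtain y where "S = {y}" .
      then show False using S \<open>(\<lambda>_. 0) \<in> S\<close> by auto
    qed
    then have "card ?X2 = 0" by (simp only: card.empty)
    then show ?thesis by simp
  next
    case (Suc e)
    let ?A = "codes_card m e :: (nat \<Rightarrow> 'a) set set"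
    define F where "F = (\<lambda>S::(nat \<Rightarrow> 'a) set. ({s\<in>S. s m = 0}, {z\<in>S. z m = 1}))"
    have inj: "inj_on F ?X2"
    proof (rule inj_onI)
      fix S T assume S: "S \<in> ?X2" and T: "T \<in> ?X2" and FST: "F S = F T"
      have sub: "S \<subseteq> T" if S: "S \<in> ?X2" and T: "T \<in> ?X2" and FST: "F S = F T" for S T
      proof
        fix x assume x: "x \<in> S"
        have cS: "is_code (Suc m) S" "is_code (Suc m) T" using S T unfolding codes_card_def by auto
        show "x \<in> T"
        proof (cases "x m = 0")
          case True
          then have "x \<in> {s\<in>S. s m = 0}" using x by simp
          then show ?thesis using FST unfolding F_def by auto
        next
          case False
          have "(\<lambda>i. inverse (x m) * x i) \<in> {z\<in>S. z m = 1}" using code_norm[OF cS(1) x False] by simp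
          then have "(\<lambda>i. inverse (x m) * x i) \<in> T" using FST unfolding F_def by auto
          from is_codeD(4)[OF cS(2) this, of "x m"] have "(\<lambda>i. x m * (inverse (x m) * x i)) \<in> T" .
          moreover have "(\<lambda>i. x m * (inverse (x m) * x i)) = x" using False by (simp add: fun_eq_iff)
          ultimately show "x \<in> T" by simp
        qed
      qed
      from sub[OF S T FST] sub[OF T S FST[symmetric]] show "S = T" by blast
    qed
    have img: "F ` ?X2 \<subseteq> Sigma ?A (cosets m)"
    proof (rule image_subsetI)
      fix S assume S: "S \<in> ?X2"
      have cS: "is_code (Suc m) S" and cardS: "card S = ?q ^ d" using S unfolding codes_card_def by auto
      obtain z0 where z0: "z0 \<in> S" "z0 m \<noteq> 0" using S by auto
      define z where "z = (\<lambda>i. inverse (z0 m) * z0 i)"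
      have z: "z \<in> S" "z m = 1" using code_norm[OF cS z0] unfolding z_def by auto
      have cS0: "is_code m {s\<in>S. s m = 0}" by (rule code_short[OF cS])
      have "card S = ?q * card {s\<in>S. s m = 0}" by (rule code_split_card[OF cS z])
      hence "card {s\<in>S. s m = 0} = ?q ^ e" using cardS Suc card_UNIV_ge2[where 'a='a] by simp
      hence A: "{s\<in>S. s m = 0} \<in> ?A" using cS0 unfolding codes_card_def by simp
      have zW: "z \<in> vecs (Suc m)" using z is_codeD(1)[OF cS] by auto
      have "{w\<in>S. w m = 1} = (\<lambda>s. \<lambda>i. z i + s i) ` {s\<in>S. s m = 0}"
      proof safe
        fix w assume w: "w \<in> S" "w m = 1"
        have t: "(\<lambda>i. w i - z i) \<in> {s\<in>S. s m = 0}" using code_diff[OF cS w(1) z(1)] w z by simp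
        show "w \<in> (\<lambda>s. \<lambda>i. z i + s i) ` {s\<in>S. s m = 0}" by (rule image_eqI[OF _ t]) simp
      next
        fix s assume "s \<in> S" "s m = 0"
        then show "(\<lambda>i. z i + s i) \<in> S" using is_codeD(3)[OF cS z(1)] by blast
      next
        fix s assume "s \<in> S" "s m = 0"
        then show "z m + s m = 1" using z by simp
      qed
      hence "{w\<in>S. w m = 1} \<in> cosets m {s\<in>S. s m = 0}" unfolding cosets_def using zW z by blast
      then show "F S \<in> Sigma ?A (cosets m)" using A unfolding F_def by simp
    qed
    have fc: "finite (cosets m S0)" for S0 :: "(nat \<Rightarrow> 'a) set"
      unfolding cosets_def by (rule finite_imageI) (simp add: finite_vecs)
    have fS: "finite (Sigma ?A (cosets m))" using finite_codes_card fc by (rule finite_SigmaI)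
    have "card ?X2 \<le> card (Sigma ?A (cosets m))"
      using card_inj_on_le[OF inj img fS] .
    also have "\<dots> = (\<Sum>S0\<in>?A. card (cosets m S0))"
      by (rule card_SigmaI) (auto simp: finite_codes_card cosets_def finite_vecs)
    finally have cX2: "card ?X2 \<le> (\<Sum>S0\<in>?A. card (cosets m S0))" .
    have "card ?X2 * ?q ^ e \<le> (\<Sum>S0\<in>?A. card (cosets m S0)) * ?q ^ e"
      using cX2 by simp
    also have "\<dots> = (\<Sum>S0\<in>?A. card (cosets m S0) * ?q ^ e)" by (simp add: sum_distrib_right)
    also have "\<dots> = (\<Sum>S0\<in>?A. ?q ^ m)"
    proof (rule sum.cong[OF refl])
      fix S0 assume "S0 \<in> ?A"
      then have "is_code m S0" "card S0 = ?q ^ e" unfolding codes_card_def by auto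
      then show "card (cosets m S0) * ?q ^ e = ?q ^ m" using cosets_card[of m S0] by simp
    qed
    also have "\<dots> = card ?A * ?q ^ m" by simp
    finally have cX2': "card ?X2 * ?q ^ e \<le> card ?A * ?q ^ m" .
    have IH: "card ?A * ?q ^ (e*e) \<le> 2 ^ m * ?q ^ (e * m + e)" by (rule Suc.IH)
    have "card ?X2 * ?q ^ (d*d) = (card ?X2 * ?q ^ e) * ?q ^ (e*e + e + 1)"
      using Suc by (simp add: power_add[symmetric] algebra_simps)
    also have "\<dots> \<le> (card ?A * ?q ^ m) * ?q ^ (e*e + e + 1)" using cX2' by simp
    also have "\<dots> = (card ?A * ?q ^ (e*e)) * ?q ^ (m + e + 1)"
      by (simp add: power_add[symmetric] algebra_simps)
    also have "\<dots> \<le> (2 ^ m * ?q ^ (e * m + e)) * ?q ^ (m + e + 1)" using IH by simp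
    also have "\<dots> = 2 ^ m * ?q ^ (e * m + e + m + e + 1)" by (simp add: power_add[symmetric] algebra_simps)
    also have "\<dots> \<le> 2 ^ m * ?q ^ (d * Suc m + d)"
      using card_UNIV_ge2[where 'a='a] Suc by (intro mult_le_mono2 power_increasing) auto
    finally show ?thesis .
  qed
  have "card ?X * ?q ^ (d*d) = card ?X1 * ?q ^ (d*d) + card ?X2 * ?q ^ (d*d)"
    using split by (simp add: algebra_simps)
  also have "\<dots> \<le> 2 * (2 ^ m * ?q ^ (d * Suc m + d))" using bound1 bound2 by simp
  finally show ?case by simp
qed



definition blk :: "nat \<Rightarrow> (nat \<Rightarrow> 'a::field) \<Rightarrow> (nat \<Rightarrow> 'a) \<Rightarrow> (nat \<Rightarrow> 'a)" where
  "blk m a b = (\<lambda>k. if k < m then a k else b (k - m))"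

lemma blk_vecs: "a \<in> vecs m \<Longrightarrow> b \<in> vecs s \<Longrightarrow> blk m a b \<in> vecs (m+s)"
  unfolding blk_def vecs_def by auto

lemma dot_blk: "dot (m+s) (blk m a b) (blk m a' b') = dot m a a' + dot s b b'"
proof -
  have "dot m (blk m a b) (blk m a' b') = dot m a a'" by (rule dot_cong) (auto simp: blk_def)
  moreover have "(\<lambda>i. blk m a b (m + i)) = b" "(\<lambda>i. blk m a' b' (m + i)) = b'"
    by (auto simp: blk_def)
  ultimately show ?thesis by (simp add: dot_split)
qed

lemma blk_add: "(\<lambda>k. blk m a b k + blk m a' b' k) = blk m (\<lambda>k. a k + a' k) (\<lambda>k. b k + b' k)"
  by (auto simp: blk_def)

lemma blk_diff: "(\<lambda>k. blk m a b k - blk m a' b' k) = blk m (\<lambda>k. a k - a' k) (\<lambda>k. b k - b' k)"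
  by (auto simp: blk_def)

lemma blk_scale: "(\<lambda>k. c * blk m a b k) = blk m (\<lambda>k. c * a k) (\<lambda>k. c * b k)"
  by (auto simp: blk_def)

lemma blk_sum: "(\<lambda>k. \<Sum>i\<in>I. c i * blk m (a i) (b i) k) = blk m (\<lambda>k. \<Sum>i\<in>I. c i * a i k) (\<lambda>k. \<Sum>i\<in>I. c i * b i k)"
  by (auto simp: blk_def)

lemma blk_inj:
  assumes "a \<in> vecs m" "a' \<in> vecs m" "blk m a b = blk m a' b'"
  shows "a = a'" "b = b'"
proof -
  show "a = a'"
  proof
    fix k show "a k = a' k"
    proof (cases "k < m")
      case True then show ?thesis using fun_cong[OF assms(3), of k] by (simp add: blk_def)
    next
      case False then show ?thesis using assms(1,2) by (simp add: vecsD)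
    qed
  qed
  show "b = b'"
  proof
    fix k show "b k = b' k" using fun_cong[OF assms(3), of "m+k"] by (simp add: blk_def)
  qed
qed

lemma blk_decomp:
  assumes "v \<in> vecs (m+s)"
  shows "v = blk m (\<lambda>k. if k < m then v k else 0) (\<lambda>i. v (m+i))"
    "(\<lambda>k. if k < m then v k else 0) \<in> vecs m" "(\<lambda>i. v (m+i)) \<in> vecs s"
  using assms unfolding blk_def vecs_def by auto

lemma vecs_add: "a \<in> vecs n \<Longrightarrow> b \<in> vecs n \<Longrightarrow> (\<lambda>k. a k + b k) \<in> vecs n"
  unfolding vecs_def by auto
lemma vecs_diff: "a \<in> vecs n \<Longrightarrow> b \<in> vecs n \<Longrightarrow> (\<lambda>k. a k - b k) \<in> vecs n"
  unfolding vecs_def by auto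
lemma vecs_scale: "a \<in> vecs n \<Longrightarrow> (\<lambda>k. c * a k) \<in> vecs n"
  unfolding vecs_def by auto
lemma vecs_sum: "(\<And>i. i \<in> I \<Longrightarrow> a i \<in> vecs n) \<Longrightarrow> (\<lambda>k. \<Sum>i\<in>I. c i * a i k) \<in> vecs n"
  unfolding vecs_def by auto
lemma vecs_zero[simp]: "(\<lambda>_. 0) \<in> vecs n"
  unfolding vecs_def by auto

lemma sum_delta_if: "i < (t::nat) \<Longrightarrow> (\<Sum>j<t. c j * (if j = i then 1 else (0::'a::field))) = c i"
proof -
  assume i: "i < t"
  have "(\<Sum>j<t. c j * (if j = i then 1 else (0::'a))) = (\<Sum>j<t. if j = i then c j else 0)"
    by (rule sum.cong) auto
  also have "\<dots> = c i" using i by simp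
  finally show ?thesis .
qed

lemma sum_delta_if': "i < (t::nat) \<Longrightarrow> (\<Sum>j<t. c j * (if i = j then 1 else (0::'a::field))) = c i"
proof -
  assume i: "i < t"
  have "(\<Sum>j<t. c j * (if i = j then 1 else (0::'a))) = (\<Sum>j<t. c j * (if j = i then 1 else (0::'a)))"
    by (rule sum.cong) auto
  then show ?thesis using sum_delta_if[OF i] by simp
qed

locale blockc =
  fixes m s t :: nat and u :: "nat \<Rightarrow> nat \<Rightarrow> 'a::{finite,field}"
  assumes U1: "\<And>j. j < t \<Longrightarrow> u j \<in> vecs s"
    and U2: "\<And>i j. i < t \<Longrightarrow> j < t \<Longrightarrow> dot s (u i) (u j) = 0"
    and U3: "\<And>r. r \<in> vecs s \<Longrightarrow> (\<forall>j<t. dot s r (u j) = 0) \<Longrightarrow> \<exists>\<alpha>. r = (\<lambda>k. \<Sum>j<t. \<alpha> j * u j k)"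
begin

definition phi :: "(nat \<Rightarrow> nat \<Rightarrow> 'a) \<Rightarrow> (nat \<Rightarrow> 'a) \<Rightarrow> nat \<Rightarrow> 'a" where
  "phi Y w = (\<lambda>k. \<Sum>j<t. (- dot m w (Y j)) * u j k)"

definition E where "E Y w = blk m w (phi Y w)"
definition Z where "Z Y R (i::nat) = blk m ((Y::nat \<Rightarrow> nat \<Rightarrow> 'a) i) (R i)"
definition Phi where
  "Phi M Y R = {x. \<exists>w\<in>M. \<exists>l. x = (\<lambda>k. E Y w k + (\<Sum>i<t. l i * Z Y R i k))}"
definition Dom where
  "Dom = {(Y,R). Y \<in> {..<t} \<rightarrow>\<^sub>E vecs m \<and> R \<in> {..<t} \<rightarrow>\<^sub>E vecs s \<and>
     (\<forall>i<t. \<forall>j<t. dot s (R i) (u j) = (if i = j then 1 else 0)) \<and>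
     (\<forall>i<t. \<forall>j<t. dot m (Y i) (Y j) + dot s (R i) (R j) = 0)}"
definition UU where "UU j = blk m (\<lambda>_. 0::'a) (u j)"

lemma phi_vecs: "phi Y w \<in> vecs s"
  unfolding phi_def by (rule vecs_sum) (use U1 in auto)

lemma phi_add: "phi Y (\<lambda>k. w k + w' k) = (\<lambda>k. phi Y w k + phi Y w' k)"
  unfolding phi_def by (rule ext) (simp add: dot_add_left sum.distrib[symmetric] algebra_simps)

lemma phi_scale: "phi Y (\<lambda>k. c * w k) = (\<lambda>k. c * phi Y w k)"
  unfolding phi_def by (auto simp: dot_scale_left algebra_simps sum_distrib_left)

lemma phi_zero: "phi Y (\<lambda>_. 0) = (\<lambda>_. 0)"
  unfolding phi_def by simp

lemma dot_phi_left: "dot s (phi Y w) r = (\<Sum>j<t. (- dot m w (Y j)) * dot s (u j) r)"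
  unfolding phi_def by (simp only: dot_sum_left dot_scale_left)

lemma dot_phi_phi: "dot s (phi Y w) (phi Y w') = 0"
proof -
  have "dot s (phi Y w) (phi Y w') = (\<Sum>j<t. (- dot m w (Y j)) * dot s (u j) (phi Y w'))"
    by (rule dot_phi_left)
  also have "\<dots> = 0"
  proof (rule sum.neutral, rule ballI)
    fix j assume j: "j \<in> {..<t}"
    have "dot s (u j) (phi Y w') = dot s (phi Y w') (u j)" by (rule dot_commute)
    also have "\<dots> = 0" unfolding dot_phi_left using U2 j by (simp add: dot_commute)
    finally show "(- dot m w (Y j)) * dot s (u j) (phi Y w') = 0" by simp
  qed
  finally show ?thesis .
qed

lemma dot_phi_R:
  assumes "\<forall>i<t. \<forall>j<t. dot s (R i) (u j) = (if i = j then 1 else 0)" "i < t"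
  shows "dot s (phi Y w) (R i) = - dot m w (Y i)"
proof -
  have "dot s (phi Y w) (R i) = (\<Sum>j<t. (- dot m w (Y j)) * dot s (u j) (R i))" by (rule dot_phi_left)
  also have "\<dots> = (\<Sum>j<t. (- dot m w (Y j)) * (if i = j then 1 else 0))"
    using assms by (intro sum.cong) (auto simp: dot_commute)
  also have "\<dots> = - dot m w (Y i)" using sum_delta_if'[OF assms(2)] .
  finally show ?thesis .
qed

lemma dot_phi_u: "j < t \<Longrightarrow> dot s (phi Y w) (u j) = 0"
  unfolding dot_phi_left using U2 by simp

lemma DomD:
  assumes "(Y,R) \<in> Dom"
  shows "\<And>i. i < t \<Longrightarrow> Y i \<in> vecs m" "\<And>i. i < t \<Longrightarrow> R i \<in> vecs s"
    "\<forall>i<t. \<forall>j<t. dot s (R i) (u j) = (if i = j then 1 else 0)"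
    "\<And>i j. i < t \<Longrightarrow> j < t \<Longrightarrow> dot m (Y i) (Y j) + dot s (R i) (R j) = 0"
  using assms unfolding Dom_def by auto

lemma E_vecs: "w \<in> vecs m \<Longrightarrow> E Y w \<in> vecs (m+s)"
  unfolding E_def by (rule blk_vecs[OF _ phi_vecs])

lemma Z_vecs: "(Y,R) \<in> Dom \<Longrightarrow> i < t \<Longrightarrow> Z Y R i \<in> vecs (m+s)"
  unfolding Z_def by (rule blk_vecs) (auto dest: DomD)

lemma E_add: "E Y (\<lambda>k. w k + w' k) = (\<lambda>k. E Y w k + E Y w' k)"
  unfolding E_def phi_add blk_add ..

lemma E_scale: "E Y (\<lambda>k. c * w k) = (\<lambda>k. c * E Y w k)"
  unfolding E_def phi_scale blk_scale ..

lemma E_zero: "E Y (\<lambda>_. 0) = (\<lambda>_. 0)"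
  unfolding E_def phi_zero blk_def by auto

lemma dot_E_E: "dot (m+s) (E Y w) (E Y w') = dot m w w'"
  unfolding E_def dot_blk dot_phi_phi by simp

lemma dot_E_Z: "(Y,R) \<in> Dom \<Longrightarrow> i < t \<Longrightarrow> dot (m+s) (E Y w) (Z Y R i) = 0"
  unfolding E_def Z_def dot_blk using dot_phi_R[OF DomD(3)] by simp

lemma dot_Z_Z: "(Y,R) \<in> Dom \<Longrightarrow> i < t \<Longrightarrow> j < t \<Longrightarrow> dot (m+s) (Z Y R i) (Z Y R j) = 0"
  unfolding Z_def dot_blk using DomD(4) by simp

lemma dot_E_UU: "j < t \<Longrightarrow> dot (m+s) (E Y w) (UU j) = 0"
  unfolding E_def UU_def dot_blk using dot_phi_u by simp

lemma dot_Z_UU: "(Y,R) \<in> Dom \<Longrightarrow> i < t \<Longrightarrow> j < t \<Longrightarrow> dot (m+s) (Z Y R i) (UU j) = (if i = j then 1 else 0)"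
  unfolding Z_def UU_def dot_blk using DomD(3) by simp

lemma dot_lin_left: "dot N (\<lambda>k. a k + (\<Sum>i\<in>I. l i * b i k)) y = dot N a y + (\<Sum>i\<in>I. l i * dot N (b i) y)"
  by (simp only: dot_add_left dot_sum_left dot_scale_left)

lemma dot_el_UU:
  assumes "(Y,R) \<in> Dom" "j < t"
  shows "dot (m+s) (\<lambda>k. E Y w k + (\<Sum>i<t. l i * Z Y R i k)) (UU j) = l j"
proof -
  have "dot (m+s) (\<lambda>k. E Y w k + (\<Sum>i<t. l i * Z Y R i k)) (UU j) =
        (\<Sum>i<t. l i * (if i = j then 1 else 0))"
    unfolding dot_lin_left dot_E_UU[OF assms(2)] using dot_Z_UU[OF assms(1) _ assms(2)]
    by (auto intro!: sum.cong)
  also have "\<dots> = l j" by (rule sum_delta_if[OF assms(2)])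
  finally show ?thesis .
qed

lemma Phi_intro: "w \<in> M \<Longrightarrow> x = (\<lambda>k. E Y w k + (\<Sum>i<t. l i * Z Y R i k)) \<Longrightarrow> x \<in> Phi M Y R"
  unfolding Phi_def by blast

lemma Phi_E: "w \<in> M \<Longrightarrow> E Y w \<in> Phi M Y R"
  unfolding Phi_def by (auto intro!: bexI[of _ w] exI[of _ "\<lambda>_. 0"])

lemma Phi_Z:
  assumes "is_code m M" "i < t"
  shows "Z Y R i \<in> Phi M Y R"
proof -
  have "Z Y R i = (\<lambda>k. E Y (\<lambda>_. 0) k + (\<Sum>j<t. (if j = i then 1 else 0) * Z Y R j k))"
  proof (rule ext)
    fix k
    have "(\<Sum>j<t. (if j = i then 1 else 0) * Z Y R j k) = (\<Sum>j<t. Z Y R j k * (if j = i then 1 else 0))"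
      by (simp add: mult.commute)
    also have "\<dots> = Z Y R i k" by (rule sum_delta_if[OF assms(2)])
    finally show "Z Y R i k = E Y (\<lambda>_. 0) k + (\<Sum>j<t. (if j = i then 1 else 0) * Z Y R j k)"
      by (simp add: E_zero)
  qed
  then show ?thesis by (rule Phi_intro[OF is_codeD(2)[OF assms(1)]])
qed

lemma Phi_code:
  assumes M: "is_code m M" and D: "(Y,R) \<in> Dom"
  shows "is_code (m+s) (Phi M Y R)"
  unfolding is_code_def
proof (intro conjI ballI allI)
  show "Phi M Y R \<subseteq> vecs (m + s)"
  proof
    fix x assume "x \<in> Phi M Y R"
    then obtain w l where w: "w \<in> M" and x: "x = (\<lambda>k. E Y w k + (\<Sum>i<t. l i * Z Y R i k))"
      unfolding Phi_def by auto
    have "E Y w \<in> vecs (m+s)" using w is_codeD(1)[OF M] E_vecs by auto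
    moreover have "(\<lambda>k. \<Sum>i<t. l i * Z Y R i k) \<in> vecs (m+s)" by (rule vecs_sum) (use Z_vecs[OF D] in auto)
    ultimately show "x \<in> vecs (m+s)" unfolding x by (rule vecs_add)
  qed
  show "(\<lambda>_. 0) \<in> Phi M Y R"
    using Phi_E[OF is_codeD(2)[OF M], of Y R] unfolding E_zero .
next
  fix x y assume x: "x \<in> Phi M Y R" and y: "y \<in> Phi M Y R"
  obtain w l where w: "w \<in> M" and x: "x = (\<lambda>k. E Y w k + (\<Sum>i<t. l i * Z Y R i k))"
    using x unfolding Phi_def by auto
  obtain w' l' where w': "w' \<in> M" and y: "y = (\<lambda>k. E Y w' k + (\<Sum>i<t. l' i * Z Y R i k))"
    using y unfolding Phi_def by auto
  have "(\<lambda>k. x k + y k) = (\<lambda>k. E Y (\<lambda>k. w k + w' k) k + (\<Sum>i<t. (l i + l' i) * Z Y R i k))"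
    unfolding x y E_add by (auto simp: algebra_simps sum.distrib)
  moreover have "(\<lambda>k. w k + w' k) \<in> M" using is_codeD(3)[OF M w w'] .
  ultimately show "(\<lambda>k. x k + y k) \<in> Phi M Y R" by (intro Phi_intro)
next
  fix a x assume x: "x \<in> Phi M Y R"
  obtain w l where w: "w \<in> M" and x: "x = (\<lambda>k. E Y w k + (\<Sum>i<t. l i * Z Y R i k))"
    using x unfolding Phi_def by auto
  have "(\<lambda>k. a * x k) = (\<lambda>k. E Y (\<lambda>k. a * w k) k + (\<Sum>i<t. (a * l i) * Z Y R i k))"
    unfolding x E_scale by (auto simp: algebra_simps sum_distrib_left)
  moreover have "(\<lambda>k. a * w k) \<in> M" using is_codeD(4)[OF M w] .
  ultimately show "(\<lambda>k. a * x k) \<in> Phi M Y R" by (intro Phi_intro)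
qed

lemma Phi_orth:
  assumes M: "\<And>w w'. w \<in> M \<Longrightarrow> w' \<in> M \<Longrightarrow> dot m w w' = 0" and D: "(Y,R) \<in> Dom"
    and x: "x \<in> Phi M Y R" and y: "y \<in> Phi M Y R"
  shows "dot (m+s) x y = 0"
proof -
  obtain w l where w: "w \<in> M" and x: "x = (\<lambda>k. E Y w k + (\<Sum>i<t. l i * Z Y R i k))"
    using x unfolding Phi_def by auto
  obtain w' l' where w': "w' \<in> M" and y: "y = (\<lambda>k. E Y w' k + (\<Sum>i<t. l' i * Z Y R i k))"
    using y unfolding Phi_def by auto
  have Ey: "dot (m+s) (E Y w) y = 0"
  proof -
    have "dot (m+s) (E Y w) y = dot (m+s) y (E Y w)" by (rule dot_commute)
    also have "\<dots> = dot m w' w + (\<Sum>i<t. l' i * dot (m+s) (Z Y R i) (E Y w))"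
      unfolding y dot_lin_left dot_E_E ..
    also have "\<dots> = 0" using M[OF w' w] dot_E_Z[OF D] by (simp add: dot_commute)
    finally show ?thesis .
  qed
  have Zy: "dot (m+s) (Z Y R i) y = 0" if i: "i < t" for i
  proof -
    have "dot (m+s) (Z Y R i) y = dot (m+s) y (Z Y R i)" by (rule dot_commute)
    also have "\<dots> = dot (m+s) (E Y w') (Z Y R i) + (\<Sum>j<t. l' j * dot (m+s) (Z Y R j) (Z Y R i))"
      unfolding y dot_lin_left ..
    also have "\<dots> = 0" using dot_E_Z[OF D i] dot_Z_Z[OF D _ i] by simp
    finally show ?thesis .
  qed
  show ?thesis unfolding x dot_lin_left using Ey Zy by simp
qed

lemma Phi_pair:
  assumes D: "(Y,R) \<in> Dom" and x: "x \<in> Phi M Y R" and p: "\<And>j. j < t \<Longrightarrow> dot (m+s) x (UU j) = 0"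
  shows "\<exists>w\<in>M. x = E Y w"
proof -
  obtain w l where w: "w \<in> M" and x: "x = (\<lambda>k. E Y w k + (\<Sum>i<t. l i * Z Y R i k))"
    using x unfolding Phi_def by auto
  have "l j = 0" if "j < t" for j using p[OF that] dot_el_UU[OF D that, of w l] x by simp
  then have "x = E Y w" unfolding x by simp
  then show ?thesis using w by blast
qed

lemma Phi_recover:
  assumes M: "is_code m M" and D: "(Y,R) \<in> Dom"
  shows "M = {w \<in> vecs m. \<exists>\<beta>. blk m w (\<lambda>k. \<Sum>j<t. \<beta> j * u j k) \<in> Phi M Y R}"
proof safe
  fix w assume w: "w \<in> M"
  then show "w \<in> vecs m" using is_codeD(1)[OF M] by auto
  have e: "blk m w (\<lambda>k. \<Sum>j<t. (- dot m w (Y j)) * u j k) = E Y w" unfolding E_def phi_def ..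
  show "\<exists>\<beta>. blk m w (\<lambda>k. \<Sum>j<t. \<beta> j * u j k) \<in> Phi M Y R"
    by (rule exI[of _ "\<lambda>j. - dot m w (Y j)"]) (simp only: e Phi_E[OF w])
next
  fix w \<beta> assume w: "w \<in> vecs m" and b: "blk m w (\<lambda>k. \<Sum>j<t. \<beta> j * u j k) \<in> Phi M Y R"
  have "dot (m+s) (blk m w (\<lambda>k. \<Sum>j<t. \<beta> j * u j k)) (UU j) = 0" if j: "j < t" for j
  proof -
    have "dot (m+s) (blk m w (\<lambda>k. \<Sum>j<t. \<beta> j * u j k)) (UU j) = dot s (\<lambda>k. \<Sum>j<t. \<beta> j * u j k) (u j)"
      unfolding UU_def dot_blk by simp
    also have "\<dots> = 0" by (simp only: dot_sum_left dot_scale_left) (use U2 j in simp)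
    finally show ?thesis .
  qed
  from Phi_pair[OF D b this] obtain w0 where w0: "w0 \<in> M" "blk m w (\<lambda>k. \<Sum>j<t. \<beta> j * u j k) = E Y w0"
    by blast
  have "w = w0" using blk_inj(1)[OF w _ w0(2)[unfolded E_def]] w0(1) is_codeD(1)[OF M] by auto
  then show "w \<in> M" using w0 by simp
qed

lemma Phi_dual:
  assumes M: "self_dual m M" and D: "(Y,R) \<in> Dom"
  shows "dual_code (m+s) (Phi M Y R) \<subseteq> Phi M Y R"
proof
  have Mc: "is_code m M" and MM: "M = dual_code m M" using M unfolding self_dual_def by auto
  have Mo: "dot m w w' = 0" if "w \<in> M" "w' \<in> M" for w w'
    using that MM unfolding dual_code_def by blast
  fix v assume v: "v \<in> dual_code (m+s) (Phi M Y R)"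
  have vv: "v \<in> vecs (m+s)" and vo: "\<And>x. x \<in> Phi M Y R \<Longrightarrow> dot (m+s) v x = 0"
    using v unfolding dual_code_def by auto
  define a where "a = (\<lambda>k. if k < m then v k else 0)"
  define b where "b = (\<lambda>i. v (m+i))"
  have vab: "v = blk m a b" and a: "a \<in> vecs m" and b: "b \<in> vecs s"
    using blk_decomp[OF vv] unfolding a_def b_def by auto
  define l where "l = (\<lambda>j. dot s b (u j))"
  define a' where "a' = (\<lambda>k. a k - (\<Sum>i<t. l i * Y i k))"
  define b' where "b' = (\<lambda>k. b k - (\<Sum>i<t. l i * R i k))"
  define v' where "v' = (\<lambda>k. v k - (\<Sum>i<t. l i * Z Y R i k))"
  have v'ab: "v' = blk m a' b'"
    unfolding v'_def a'_def b'_def vab Z_def by (rule ext) (simp add: blk_def)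
  have a': "a' \<in> vecs m" unfolding a'_def by (rule vecs_diff[OF a vecs_sum]) (use DomD(1)[OF D] in auto)
  have b': "b' \<in> vecs s" unfolding b'_def by (rule vecs_diff[OF b vecs_sum]) (use DomD(2)[OF D] in auto)
  have b'u: "\<forall>j<t. dot s b' (u j) = 0"
  proof (intro allI impI)
    fix j assume j: "j < t"
    have "dot s b' (u j) = l j - (\<Sum>i<t. l i * dot s (R i) (u j))"
      unfolding b'_def l_def by (simp only: dot_diff_left dot_sum_left dot_scale_left)
    also have "\<dots> = l j - (\<Sum>i<t. l i * (if i = j then 1 else 0))"
      using DomD(3)[OF D] j by simp
    also have "\<dots> = 0" using sum_delta_if[OF j, of l] by simp
    finally show "dot s b' (u j) = 0" .
  qed
  obtain \<alpha> where alpha: "b' = (\<lambda>k. \<Sum>j<t. \<alpha> j * u j k)" using U3[OF b' b'u] by blast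
  have v'o: "dot (m+s) v' x = 0" if x: "x \<in> Phi M Y R" for x
  proof -
    have "dot (m+s) v' x = dot (m+s) v x - (\<Sum>i<t. l i * dot (m+s) (Z Y R i) x)"
      unfolding v'_def by (simp only: dot_diff_left dot_sum_left dot_scale_left)
    also have "\<dots> = 0" using vo[OF x] Phi_orth[OF Mo D Phi_Z[OF Mc] x] by simp
    finally show ?thesis .
  qed
  have "a' \<in> dual_code m M" unfolding dual_code_def
  proof (intro CollectI conjI ballI a')
    fix w assume w: "w \<in> M"
    have "dot (m+s) v' (E Y w) = dot m a' w + dot s b' (phi Y w)"
      unfolding v'ab E_def dot_blk ..
    also have "dot s b' (phi Y w) = 0"
    proof -
      have "dot s b' (phi Y w) = (\<Sum>j<t. \<alpha> j * dot s (u j) (phi Y w))"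
        unfolding alpha by (simp only: dot_sum_left dot_scale_left)
      also have "\<dots> = 0" by (rule sum.neutral) (simp add: dot_commute[of s _ "phi Y w"] dot_phi_u)
      finally show ?thesis .
    qed
    finally show "dot m a' w = 0" using v'o[OF Phi_E[OF w]] by simp
  qed
  hence a'M: "a' \<in> M" using MM by simp
  have coef: "\<alpha> i = - dot m a' (Y i)" if i: "i < t" for i
  proof -
    have "dot (m+s) v' (Z Y R i) - dot (m+s) (E Y a') (Z Y R i) = 0"
      using v'o[OF Phi_Z[OF Mc i]] dot_E_Z[OF D i] by simp
    moreover have "dot (m+s) v' (Z Y R i) = dot m a' (Y i) + dot s b' (R i)"
      unfolding v'ab Z_def dot_blk ..
    moreover have "dot s b' (R i) = \<alpha> i"
    proof -
      have "dot s b' (R i) = (\<Sum>j<t. \<alpha> j * dot s (u j) (R i))"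
        unfolding alpha by (simp only: dot_sum_left dot_scale_left)
      also have "\<dots> = (\<Sum>j<t. \<alpha> j * (if j = i then 1 else 0))"
        using DomD(3)[OF D] i by (intro sum.cong) (auto simp: dot_commute)
      also have "\<dots> = \<alpha> i" by (rule sum_delta_if[OF i])
      finally show ?thesis .
    qed
    ultimately have "dot m a' (Y i) + \<alpha> i = 0" using dot_E_Z[OF D i, of a'] by simp
    then show ?thesis by (simp add: eq_neg_iff_add_eq_0 add.commute)
  qed
  have "b' = phi Y a'" unfolding alpha phi_def using coef by (auto intro!: sum.cong)
  hence "v' = E Y a'" unfolding v'ab E_def by simp
  hence "v = (\<lambda>k. E Y a' k + (\<Sum>i<t. l i * Z Y R i k))" unfolding v'_def
    by (auto simp: fun_eq_iff diff_eq_eq)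
  then show "v \<in> Phi M Y R" by (intro Phi_intro[OF a'M])
qed

lemma Phi_self_dual:
  assumes M: "self_dual m M" and D: "(Y,R) \<in> Dom"
  shows "self_dual (m+s) (Phi M Y R)"
proof -
  have Mc: "is_code m M" and MM: "M = dual_code m M" using M unfolding self_dual_def by auto
  have Mo: "dot m w w' = 0" if "w \<in> M" "w' \<in> M" for w w'
    using that MM unfolding dual_code_def by blast
  have c: "is_code (m+s) (Phi M Y R)" by (rule Phi_code[OF Mc D])
  have "Phi M Y R \<subseteq> dual_code (m+s) (Phi M Y R)"
    using Phi_orth[OF Mo D] is_codeD(1)[OF c] unfolding dual_code_def by auto
  then show ?thesis using Phi_dual[OF M D] c unfolding self_dual_def by auto
qed

lemma finite_Dom: "finite Dom"
proof -
  have "Dom \<subseteq> ({..<t} \<rightarrow>\<^sub>E vecs m) \<times> ({..<t} \<rightarrow>\<^sub>E vecs s)" unfolding Dom_def by auto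
  moreover have "finite (({..<t} \<rightarrow>\<^sub>E (vecs m :: (nat \<Rightarrow> 'a) set)) \<times> ({..<t} \<rightarrow>\<^sub>E (vecs s :: (nat \<Rightarrow> 'a) set)))"
    by (intro finite_cartesian_product finite_PiE finite_vecs) auto
  ultimately show ?thesis by (rule finite_subset)
qed

lemma finite_sd: "finite {M :: (nat \<Rightarrow> 'a) set. self_dual n M}"
  by (rule finite_subset[OF _ finite_codes[of n]]) (auto simp: self_dual_def)

lemma Z_diff_pair:
  assumes D: "(Y,R) \<in> Dom" and D': "(Y',R') \<in> Dom" and i: "i < t" and j: "j < t"
  shows "dot (m+s) (\<lambda>k. Z Y R i k - Z Y' R' i k) (UU j) = 0"
  using dot_Z_UU[OF D i j] dot_Z_UU[OF D' i j] by (simp add: dot_diff_left)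

lemma count:
  "card {M::(nat\<Rightarrow>'a) set. self_dual m M} * card Dom
     \<le> card {L::(nat\<Rightarrow>'a) set. self_dual (m+s) L} * (card (UNIV::'a set) ^ (m div 2)) ^ t"
proof -
  let ?K = "(card (UNIV::'a set) ^ (m div 2)) ^ t"
  let ?A = "{M::(nat\<Rightarrow>'a) set. self_dual m M} \<times> Dom"
  define f where "f = (\<lambda>(M, (Y,R)). Phi M Y R)"
  have fA: "finite ?A" using finite_sd finite_Dom by simp
  have img: "f ` ?A \<subseteq> {L. self_dual (m+s) L}"
    unfolding f_def using Phi_self_dual by auto
  have fib: "card {x\<in>?A. f x = L} \<le> ?K" if L: "L \<in> f ` ?A" for L
  proof -
    obtain M0 Y0 R0 where A0: "(M0, (Y0, R0)) \<in> ?A" and L0: "L = Phi M0 Y0 R0"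
      using L unfolding f_def by auto
    have M0: "self_dual m M0" and D0: "(Y0,R0) \<in> Dom" using A0 by auto
    have M0c: "is_code m M0" using M0 unfolding self_dual_def by auto
    have Lc: "is_code (m+s) L" using Phi_self_dual[OF M0 D0] L0 unfolding self_dual_def by auto
    define g where "g = (\<lambda>(M::(nat\<Rightarrow>'a) set, (Y::nat \<Rightarrow> nat \<Rightarrow> 'a, R::nat \<Rightarrow> nat \<Rightarrow> 'a)).
       (\<lambda>i\<in>{..<t}. (\<lambda>k. Y i k - Y0 i k)))"
    have fibM: "M = M0" if x: "(M,(Y,R)) \<in> {x\<in>?A. f x = L}" for M Y R
    proof -
      have M: "self_dual m M" and D: "(Y,R) \<in> Dom" and LL: "Phi M Y R = L"
        using x unfolding f_def by auto
      have "is_code m M" using M unfolding self_dual_def by auto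
      from Phi_recover[OF this D] Phi_recover[OF M0c D0] show "M = M0" using LL L0 by simp
    qed
    have diffM: "(\<lambda>k. Y i k - Y0 i k) \<in> M0" if x: "(M,(Y,R)) \<in> {x\<in>?A. f x = L}" and i: "i < t" for M Y R i
    proof -
      have D: "(Y,R) \<in> Dom" and LL: "Phi M Y R = L" and MM: "M = M0"
        using x fibM[OF x] unfolding f_def by auto
      have "Z Y R i \<in> L" using Phi_Z[OF M0c i, of Y R] LL MM by simp
      moreover have "Z Y0 R0 i \<in> L" using Phi_Z[OF M0c i, of Y0 R0] L0 by simp
      ultimately have xL: "(\<lambda>k. Z Y R i k - Z Y0 R0 i k) \<in> Phi M0 Y0 R0" using code_diff[OF Lc] L0 by simp
      obtain w where w: "w \<in> M0" "(\<lambda>k. Z Y R i k - Z Y0 R0 i k) = E Y0 w"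
        using Phi_pair[OF D0 xL Z_diff_pair[OF D D0 i]] by blast
      have "blk m (\<lambda>k. Y i k - Y0 i k) (\<lambda>k. R i k - R0 i k) = blk m w (phi Y0 w)"
        using w(2) unfolding Z_def E_def blk_diff .
      moreover have "(\<lambda>k. Y i k - Y0 i k) \<in> vecs m" using DomD(1)[OF D i] DomD(1)[OF D0 i] by (rule vecs_diff)
      moreover have "w \<in> vecs m" using w(1) is_codeD(1)[OF M0c] by auto
      ultimately have "(\<lambda>k. Y i k - Y0 i k) = w" using blk_inj(1) by blast
      then show ?thesis using w by simp
    qed
    have inj: "inj_on g {x\<in>?A. f x = L}"
    proof (rule inj_onI)
      fix x x' assume x: "x \<in> {x\<in>?A. f x = L}" and x': "x' \<in> {x\<in>?A. f x = L}" and g: "g x = g x'"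
      obtain M Y R where xe: "x = (M,(Y,R))" by (cases x) auto
      obtain M' Y' R' where xe': "x' = (M',(Y',R'))" by (cases x') auto
      have D: "(Y,R) \<in> Dom" and D': "(Y',R') \<in> Dom" and LL: "Phi M Y R = L" and LL': "Phi M' Y' R' = L"
        using x x' xe xe' unfolding f_def by auto
      have MM: "M = M0" "M' = M0" using fibM[of M Y R] fibM[of M' Y' R'] x x' xe xe' by simp_all
      have YY: "Y i = Y' i" if i: "i < t" for i
      proof -
        have "(\<lambda>k. Y i k - Y0 i k) = (\<lambda>k. Y' i k - Y0 i k)"
          using fun_cong[OF g, of i] i xe xe' unfolding g_def by simp
        then show ?thesis by (auto simp: fun_eq_iff)
      qed
      have Y: "Y = Y'"
      proof
        fix i show "Y i = Y' i"
        proof (cases "i < t")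
          case True then show ?thesis using YY by simp
        next
          case False then show ?thesis using D D' unfolding Dom_def by (auto simp: PiE_def extensional_def)
        qed
      qed
      have RR: "R i = R' i" if i: "i < t" for i
      proof -
        have "Z Y R i \<in> L" using Phi_Z[OF M0c i, of Y R] LL MM by simp
        moreover have "Z Y' R' i \<in> L" using Phi_Z[OF M0c i, of Y' R'] LL' MM by simp
        ultimately have xL: "(\<lambda>k. Z Y R i k - Z Y' R' i k) \<in> Phi M0 Y0 R0" using code_diff[OF Lc] L0 by simp
        obtain w where w: "w \<in> M0" "(\<lambda>k. Z Y R i k - Z Y' R' i k) = E Y0 w"
          using Phi_pair[OF D0 xL Z_diff_pair[OF D D' i]] by blast
        have eq: "blk m (\<lambda>_. 0) (\<lambda>k. R i k - R' i k) = blk m w (phi Y0 w)"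
          using w(2) Y unfolding Z_def E_def blk_diff by simp
        have wv: "w \<in> vecs m" using w(1) is_codeD(1)[OF M0c] by auto
        have "(\<lambda>_. 0) = w" "(\<lambda>k. R i k - R' i k) = phi Y0 w"
          by (rule blk_inj(1)[OF vecs_zero wv eq], rule blk_inj(2)[OF vecs_zero wv eq])
        then have "(\<lambda>k. R i k - R' i k) = (\<lambda>_. 0)" using phi_zero by simp
        then show ?thesis by (auto simp: fun_eq_iff)
      qed
      have R: "R = R'"
      proof
        fix i show "R i = R' i"
        proof (cases "i < t")
          case True then show ?thesis using RR by simp
        next
          case False then show ?thesis using D D' unfolding Dom_def by (auto simp: PiE_def extensional_def)
        qed
      qed
      show "x = x'" using xe xe' MM Y R by simp
    qed
    have gimg: "g ` {x\<in>?A. f x = L} \<subseteq> {..<t} \<rightarrow>\<^sub>E M0"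
    proof (rule image_subsetI)
      fix x assume x: "x \<in> {x\<in>?A. f x = L}"
      obtain M Y R where xe: "x = (M,(Y,R))" by (cases x) auto
      show "g x \<in> {..<t} \<rightarrow>\<^sub>E M0" using diffM[of M Y R] x xe unfolding g_def by auto
    qed
    have fM0: "finite M0" using finite_code[OF M0c] .
    have "card {x\<in>?A. f x = L} \<le> card ({..<t} \<rightarrow>\<^sub>E M0)"
      by (rule card_inj_on_le[OF inj gimg]) (simp add: finite_PiE fM0)
    also have "\<dots> = card M0 ^ t" by (simp add: card_PiE)
    also have "\<dots> = ?K" using self_dual_card(2)[OF M0] by simp
    finally show ?thesis .
  qed
  have "card ?A \<le> ?K * card (f ` ?A)" by (rule card_le_fiber[OF fA fib])
  also have "\<dots> \<le> ?K * card {L::(nat\<Rightarrow>'a) set. self_dual (m+s) L}"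
    by (intro mult_le_mono2 card_mono[OF finite_sd img])
  finally show ?thesis by (simp add: card_cartesian_product mult.commute)
qed

end



lemma dot2: "dot 2 x y = x 0 * y 0 + x 1 * y 1"
  unfolding dot_def by (simp add: numeral_2_eq_2 lessThan_Suc)

lemma dot4: "dot 4 x y = x 0 * y 0 + x 1 * y 1 + x 2 * y 2 + x 3 * y 3"
proof -
  have "{..<4::nat} = {0,1,2,3}" by auto
  then show ?thesis unfolding dot_def by (simp add: algebra_simps)
qed

definition u2 :: "'a::field \<Rightarrow> nat \<Rightarrow> nat \<Rightarrow> 'a" where
  "u2 a = (\<lambda>j k. if k = 0 then 1 else if k = 1 then a else 0)"

lemma blockc2:
  fixes a :: "'a::{finite,field}"
  assumes a: "a * a = -1"
  shows "blockc 2 1 (u2 a)"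
proof
  fix j :: nat assume "j < 1"
  show "u2 a j \<in> vecs 2" unfolding u2_def vecs_def by auto
next
  fix i j :: nat assume "i < 1" "j < 1"
  show "dot 2 (u2 a i) (u2 a j) = 0" unfolding dot2 u2_def using a by simp
next
  fix r :: "nat \<Rightarrow> 'a" assume r: "r \<in> vecs 2" and o: "\<forall>j<1. dot 2 r (u2 a j) = 0"
  have e: "r 0 + r 1 * a = 0" using o unfolding dot2 u2_def by simp
  show "\<exists>\<alpha>. r = (\<lambda>k. \<Sum>j<1. \<alpha> j * u2 a j k)"
  proof (rule exI[of _ "\<lambda>_. - (a * r 1)"], rule ext)
    fix k
    show "r k = (\<Sum>j<1. - (a * r 1) * u2 a j k)"
    proof (cases "k = 0")
      case True then show ?thesis using e unfolding u2_def by (simp add: algebra_simps eq_neg_iff_add_eq_0)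
    next
      case k0: False
      show ?thesis
      proof (cases "k = 1")
        case True
        have "- (a * r 1) * a = - (a * a) * r 1" by (simp add: algebra_simps)
        then show ?thesis using True a unfolding u2_def by simp
      next
        case False
        then have "r k = 0" using r k0 by (auto simp: vecs_def)
        then show ?thesis using False k0 unfolding u2_def by simp
      qed
    qed
  qed
qed



lemma sum_sq_char2:
  fixes f :: "nat \<Rightarrow> 'a::field"
  assumes two: "(2::'a) = 0"
  shows "(\<Sum>i<n. f i * f i) = (\<Sum>i<n. f i) * (\<Sum>i<n. f i)"
proof (induction n)
  case 0 then show ?case by simp
next
  case (Suc n)
  have "(\<Sum>i<Suc n. f i) * (\<Sum>i<Suc n. f i) =
        (\<Sum>i<n. f i) * (\<Sum>i<n. f i) + 2 * ((\<Sum>i<n. f i) * f n) + f n * f n"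
    by (simp add: algebra_simps)
  then show ?case using Suc two by simp
qed

lemma dom2_card:
  fixes a :: "'a::{finite,field}"
  assumes a: "a * a = -1" and m: "1 \<le> m"
  shows "card (UNIV::'a set) ^ (m - 1) \<le> card (blockc.Dom m 2 1 (u2 a))"
proof -
  let ?D = "blockc.Dom m 2 1 (u2 a)"
  interpret B: blockc m 2 1 "u2 a" by (rule blockc2[OF a])
  have fD: "finite ?D" by (rule B.finite_Dom)
  show ?thesis
  proof (cases "(2::'a) = 0")
    case False
    define al where "al = (\<lambda>y::nat \<Rightarrow> 'a. - (1 + dot m y y) / 2)"
    define rr where "rr = (\<lambda>y::nat \<Rightarrow> 'a. (\<lambda>k::nat. if k = 0 then 1 + al y else if k = 1 then a * al y else 0))"
    define F where "F = (\<lambda>y::nat \<Rightarrow> 'a. ((\<lambda>i\<in>{..<1::nat}. y), (\<lambda>i\<in>{..<1::nat}. rr y)))"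
    have inj: "inj_on F (vecs m)"
      by (rule inj_onI) (auto simp: F_def fun_eq_iff restrict_def, metis)
    have img: "F ` vecs m \<subseteq> ?D"
    proof (rule image_subsetI)
      fix y :: "nat \<Rightarrow> 'a" assume y: "y \<in> vecs m"
      have rv: "rr y \<in> vecs 2" unfolding rr_def vecs_def by auto
      have aa: "a * (a * al y) = - al y" using a by (simp add: mult.assoc[symmetric])
      have d1: "dot 2 (rr y) (u2 a 0) = 1" unfolding dot2 rr_def u2_def
        using aa by (simp add: algebra_simps)
      have "2 * al y = - (1 + dot m y y)" unfolding al_def using False by simp
      moreover have "dot 2 (rr y) (rr y) = 1 + 2 * al y"
      proof -
        have r0: "rr y 0 = 1 + al y" and r1: "rr y 1 = a * al y" unfolding rr_def by simp_all
        have "(a * al y) * (a * al y) = (a * a) * (al y * al y)" by (simp add: mult_ac)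
        also have "\<dots> = - (al y * al y)" using a by simp
        finally have e: "(a * al y) * (a * al y) = - (al y * al y)" .
        have "dot 2 (rr y) (rr y) = (1 + al y) * (1 + al y) + (a * al y) * (a * al y)"
          unfolding dot2 r0 r1 ..
        also have "\<dots> = 1 + 2 * al y" unfolding e by (simp add: algebra_simps)
        finally show ?thesis .
      qed
      ultimately have d2: "dot m y y + dot 2 (rr y) (rr y) = 0" by (simp add: algebra_simps)
      show "F y \<in> ?D" unfolding B.Dom_def F_def using y rv d1 d2 by auto
    qed
    have "card (UNIV::'a set) ^ (m - 1) \<le> card (UNIV::'a set) ^ m"
      using card_UNIV_ge2[where 'a='a] by (intro power_increasing) auto
    also have "\<dots> = card (vecs m :: (nat \<Rightarrow> 'a) set)" by (simp add: card_vecs)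
    also have "\<dots> \<le> card ?D" using card_inj_on_le[OF inj img fD] .
    finally show ?thesis .
  next
    case True
    have m1: "-1 = (1::'a)" using True by (metis add_eq_0_iff_both_eq_0 eq_neg_iff_add_eq_0 one_add_one)
    define yy where "yy = (\<lambda>x::nat \<Rightarrow> 'a. x(m - 1 := 1 - (\<Sum>i<m-1. x i)))"
    define r0 where "r0 = (\<lambda>k::nat. if k = 0 then (1::'a) else 0)"
    define F where "F = (\<lambda>x::nat \<Rightarrow> 'a. ((\<lambda>i\<in>{..<1::nat}. yy x), (\<lambda>i\<in>{..<1::nat}. r0)))"
    have inj: "inj_on F (vecs (m-1))"
    proof (rule inj_onI)
      fix x x' :: "nat \<Rightarrow> 'a" assume x: "x \<in> vecs (m-1)" and x': "x' \<in> vecs (m-1)" and e: "F x = F x'"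
      have "yy x = yy x'" using fun_cong[OF arg_cong[where f=fst, OF e], of 0] unfolding F_def by simp
      show "x = x'"
      proof
        fix i show "x i = x' i"
        proof (cases "i < m - 1")
          case True then show ?thesis using fun_cong[OF \<open>yy x = yy x'\<close>, of i] unfolding yy_def by simp
        next
          case False then show ?thesis using x x' by (simp add: vecsD)
        qed
      qed
    qed
    have img: "F ` vecs (m-1) \<subseteq> ?D"
    proof (rule image_subsetI)
      fix x :: "nat \<Rightarrow> 'a" assume x: "x \<in> vecs (m-1)"
      have yv: "yy x \<in> vecs m" using x m unfolding yy_def vecs_def by auto
      have rv: "r0 \<in> vecs 2" unfolding r0_def vecs_def by auto
      have d1: "dot 2 r0 (u2 a 0) = 1" unfolding dot2 r0_def u2_def by simp
      have s1: "(\<Sum>i<m. yy x i) = 1"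
      proof -
        have "{..<m} = insert (m-1) {..<m-1}" using m by auto
        then have "(\<Sum>i<m. yy x i) = yy x (m-1) + (\<Sum>i<m-1. yy x i)" by simp
        also have "(\<Sum>i<m-1. yy x i) = (\<Sum>i<m-1. x i)" unfolding yy_def by (rule sum.cong) auto
        finally show ?thesis unfolding yy_def by simp
      qed
      have "dot m (yy x) (yy x) = 1" unfolding dot_def using sum_sq_char2[OF True, of "yy x" m] s1 by simp
      moreover have "dot 2 r0 r0 = 1" unfolding dot2 r0_def by simp
      ultimately have d2: "dot m (yy x) (yy x) + dot 2 r0 r0 = 0" using True by simp
      show "F x \<in> ?D" unfolding B.Dom_def F_def using yv rv d1 d2 by auto
    qed
    have "card (UNIV::'a set) ^ (m - 1) = card (vecs (m-1) :: (nat \<Rightarrow> 'a) set)" by (simp add: card_vecs)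
    also have "\<dots> \<le> card ?D" using card_inj_on_le[OF inj img fD] .
    finally show ?thesis .
  qed
qed



definition u4 :: "'a::field \<Rightarrow> 'a \<Rightarrow> nat \<Rightarrow> nat \<Rightarrow> 'a" where
  "u4 b c = (\<lambda>j k. if j = 0 then (if k = 0 then 1 else if k = 1 then b else if k = 2 then c else 0)
                   else (if k = 1 then c else if k = 2 then - b else if k = 3 then 1 else 0))"

lemma u4_0: "u4 b c 0 0 = 1" "u4 b c 0 1 = b" "u4 b c 0 2 = c" "u4 b c 0 3 = 0"
  and u4_1: "u4 b c 1 0 = 0" "u4 b c 1 1 = c" "u4 b c 1 2 = - b" "u4 b c 1 3 = 1"
  unfolding u4_def by simp_all

lemma blockc4:
  fixes b c :: "'a::{finite,field}"
  assumes bc: "b * b + c * c = -1"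
  shows "blockc 4 2 (u4 b c)"
proof
  fix j :: nat assume "j < 2"
  show "u4 b c j \<in> vecs 4" unfolding u4_def vecs_def by auto
next
  fix i j :: nat assume i: "i < 2" and j: "j < 2"
  have e00: "dot 4 (u4 b c 0) (u4 b c 0) = 0" unfolding dot4 u4_0 using bc by algebra
  have e01: "dot 4 (u4 b c 0) (u4 b c 1) = 0" unfolding dot4 u4_0 u4_1 by algebra
  have e10: "dot 4 (u4 b c 1) (u4 b c 0) = 0" unfolding dot4 u4_0 u4_1 by algebra
  have e11: "dot 4 (u4 b c 1) (u4 b c 1) = 0" unfolding dot4 u4_1 using bc by algebra
  have "i = 0 \<or> i = 1" "j = 0 \<or> j = 1" using i j by auto
  then show "dot 4 (u4 b c i) (u4 b c j) = 0" using e00 e01 e10 e11 by auto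
next
  fix r :: "nat \<Rightarrow> 'a" assume r: "r \<in> vecs 4" and o: "\<forall>j<2. dot 4 r (u4 b c j) = 0"
  have o0: "r 0 + r 1 * b + r 2 * c = 0" using o[rule_format, of 0] unfolding dot4 u4_0 by simp
  have o1: "r 1 * c - r 2 * b + r 3 = 0" using o[rule_format, of 1] unfolding dot4 u4_1 by simp
  show "\<exists>\<alpha>. r = (\<lambda>k. \<Sum>j<2. \<alpha> j * u4 b c j k)"
  proof (rule exI[of _ "\<lambda>j. if j = 0 then r 0 else r 3"], rule ext)
    fix k
    have s: "(\<Sum>j<2. (if j = 0 then r 0 else r 3) * u4 b c j k) = r 0 * u4 b c 0 k + r 3 * u4 b c 1 k"
      by (simp add: numeral_2_eq_2)
    have "k = 0 \<or> k = 1 \<or> k = 2 \<or> k = 3 \<or> 4 \<le> k" by auto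
    moreover have "r 1 = r 0 * b + r 3 * c" using o0 o1 bc by algebra
    moreover have "r 2 = r 0 * c + r 3 * (- b)" using o0 o1 bc by algebra
    moreover have "4 \<le> k \<Longrightarrow> r k = 0" using r by (simp add: vecsD)
    moreover have "4 \<le> k \<Longrightarrow> u4 b c 0 k = 0 \<and> u4 b c 1 k = 0" unfolding u4_def by auto
    ultimately show "r k = (\<Sum>j<2. (if j = 0 then r 0 else r 3) * u4 b c j k)"
      unfolding s unfolding u4_def by auto
  qed
qed

lemma dom4_card:
  fixes b c :: "'a::{finite,field}"
  assumes bc: "b * b + c * c = -1" and two: "(2::'a) \<noteq> 0"
  shows "card (UNIV::'a set) ^ (2 * m) \<le> card (blockc.Dom m 4 2 (u4 b c))"
proof -
  let ?D = "blockc.Dom m 4 2 (u4 b c)"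
  interpret B: blockc m 4 2 "u4 b c" by (rule blockc4[OF bc])
  have fD: "finite ?D" by (rule B.finite_Dom)
  define R0 where "R0 = (\<lambda>y1 y2::nat \<Rightarrow> 'a. let x = - (1 + dot m y1 y1) / 2; y = - dot m y1 y2 in
     (\<lambda>k::nat. if k = 0 then 1 + x else if k = 1 then x * b + y * c else if k = 2 then x * c - y * b
        else if k = 3 then y else 0))"
  define R1 where "R1 = (\<lambda>y2::nat \<Rightarrow> 'a. let z = - (1 + dot m y2 y2) / 2 in
     (\<lambda>k::nat. if k = 1 then z * c else if k = 2 then - (z * b) else if k = 3 then 1 + z else 0))"
  define F where "F = (\<lambda>(y1::nat \<Rightarrow> 'a, y2::nat \<Rightarrow> 'a).
     ((\<lambda>i\<in>{..<2::nat}. if i = 0 then y1 else y2), (\<lambda>i\<in>{..<2::nat}. if i = 0 then R0 y1 y2 else R1 y2)))"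
  have inj: "inj_on F (vecs m \<times> vecs m)"
  proof (rule inj_onI, clarify)
    fix y1 y2 y1' y2' :: "nat \<Rightarrow> 'a"
    assume e: "F (y1, y2) = F (y1', y2')"
    have "y1 = y1'" using fun_cong[OF arg_cong[where f=fst, OF e], of 0] unfolding F_def by simp
    moreover have "y2 = y2'" using fun_cong[OF arg_cong[where f=fst, OF e], of 1] unfolding F_def by simp
    ultimately show "y1 = y1' \<and> y2 = y2'" by simp
  qed
  have img: "F ` (vecs m \<times> vecs m) \<subseteq> ?D"
  proof (rule image_subsetI, clarify)
    fix y1 y2 :: "nat \<Rightarrow> 'a" assume y1: "y1 \<in> vecs m" and y2: "y2 \<in> vecs m"
    define x where "x = - (1 + dot m y1 y1) / 2"
    define y where "y = - dot m y1 y2"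
    define z where "z = - (1 + dot m y2 y2) / 2"
    have R0e: "R0 y1 y2 0 = 1 + x" "R0 y1 y2 1 = x * b + y * c" "R0 y1 y2 2 = x * c - y * b" "R0 y1 y2 3 = y"
      unfolding R0_def x_def y_def Let_def by simp_all
    have R1e: "R1 y2 0 = 0" "R1 y2 1 = z * c" "R1 y2 2 = - (z * b)" "R1 y2 3 = 1 + z"
      unfolding R1_def z_def Let_def by simp_all
    have R0v: "R0 y1 y2 \<in> vecs 4" unfolding R0_def Let_def vecs_def by auto
    have R1v: "R1 y2 \<in> vecs 4" unfolding R1_def Let_def vecs_def by auto
    have x2: "2 * x = - (1 + dot m y1 y1)" unfolding x_def using two by simp
    have z2: "2 * z = - (1 + dot m y2 y2)" unfolding z_def using two by simp
    have a1: "dot 4 (R0 y1 y2) (u4 b c 0) = 1" unfolding dot4 R0e u4_0 using bc by algebra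
    have a2: "dot 4 (R0 y1 y2) (u4 b c 1) = 0" unfolding dot4 R0e u4_1 using bc by algebra
    have a3: "dot 4 (R1 y2) (u4 b c 0) = 0" unfolding dot4 R1e u4_0 by algebra
    have a4: "dot 4 (R1 y2) (u4 b c 1) = 1" unfolding dot4 R1e u4_1 using bc by algebra
    have b1: "dot m y1 y1 + dot 4 (R0 y1 y2) (R0 y1 y2) = 0" unfolding dot4 R0e using bc x2 by algebra
    have b2: "dot m y2 y2 + dot 4 (R1 y2) (R1 y2) = 0" unfolding dot4 R1e using bc z2 by algebra
    have b3: "dot m y1 y2 + dot 4 (R0 y1 y2) (R1 y2) = 0" unfolding dot4 R0e R1e using bc y_def by algebra
    have b4: "dot m y2 y1 + dot 4 (R1 y2) (R0 y1 y2) = 0" using b3 by (simp add: dot_commute)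
    have lt2: "\<And>i::nat. i < 2 \<longleftrightarrow> i = 0 \<or> i = 1" by auto
    show "F (y1, y2) \<in> ?D" unfolding B.Dom_def F_def
      using y1 y2 R0v R1v a1 a2 a3 a4 b1 b2 b3 b4 by (auto simp: lt2)
  qed
  have "card (UNIV::'a set) ^ (2 * m) = card (vecs m \<times> vecs m :: ((nat \<Rightarrow> 'a) \<times> (nat \<Rightarrow> 'a)) set)"
    by (simp add: card_cartesian_product card_vecs power_mult_distrib power_add mult_2 )
  also have "\<dots> \<le> card ?D" using card_inj_on_le[OF inj img fD] .
  finally show ?thesis .
qed

lemma two_squares:
  "\<exists>b c::'a::{finite,field}. b * b + c * c = -1"
proof -
  let ?A = "(\<lambda>x::'a. x * x) ` UNIV"
  let ?B = "(\<lambda>y::'a. - 1 - y * y) ` UNIV"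
  let ?q = "card (UNIV::'a set)"
  have fin: "finite (UNIV - {0::'a})" by simp
  have imA: "(\<lambda>x::'a. x * x) ` (UNIV - {0}) = ?A - {0}" by auto
  have fib: "card {x \<in> UNIV - {0}. x * x = v} \<le> 2" if hv: "v \<in> (\<lambda>x::'a. x * x) ` (UNIV - {0})" for v
  proof -
    obtain x0 where x0: "x0 * x0 = v" using hv by auto
    have "{x \<in> UNIV - {0}. x * x = v} \<subseteq> {x0, - x0}"
    proof
      fix x assume "x \<in> {x \<in> UNIV - {0}. x * x = v}"
      then have "x * x = x0 * x0" using x0 by simp
      then have "(x - x0) * (x + x0) = 0" by (simp add: algebra_simps)
      then have "x = x0 \<or> x = - x0" by (auto simp: eq_neg_iff_add_eq_0)
      then show "x \<in> {x0, - x0}" by auto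
    qed
    then have "card {x \<in> UNIV - {0}. x * x = v} \<le> card {x0, - x0}" by (intro card_mono) auto
    also have "\<dots> \<le> 2" by (simp add: card_insert_if)
    finally show ?thesis .
  qed
  have "card (UNIV - {0::'a}) \<le> 2 * card ((\<lambda>x::'a. x * x) ` (UNIV - {0}))"
    by (rule card_le_fiber[OF fin fib])
  hence "?q - 1 \<le> 2 * (card ?A - 1)" unfolding imA by (simp add: card_Diff_singleton)
  hence A: "?q + 1 \<le> 2 * card ?A" using card_UNIV_ge2[where 'a='a] by (cases "card ?A") auto
  have "?B = (\<lambda>v. - 1 - v) ` ?A" by auto
  moreover have "inj_on (\<lambda>v::'a. - 1 - v) ?A" by (rule inj_onI) simp
  ultimately have B: "card ?B = card ?A" by (simp add: card_image)
  show ?thesis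
  proof (rule ccontr)
    assume "\<not> ?thesis"
    hence "?A \<inter> ?B = {}" by (auto simp: algebra_simps eq_diff_eq)
    hence "card (?A \<union> ?B) = card ?A + card ?B" by (intro card_Un_disjoint) auto
    moreover have "card (?A \<union> ?B) \<le> ?q" by (rule card_mono) auto
    ultimately show False using A B by simp
  qed
qed

lemma no_sqrt_neg1_sd2:
  assumes "\<not> (\<exists>a::'a::{finite,field}. a * a = -1)"
  shows "{M :: (nat \<Rightarrow> 'a) set. self_dual 2 M} = {}"
proof (rule ccontr)
  assume "{M :: (nat \<Rightarrow> 'a) set. self_dual 2 M} \<noteq> {}"
  then obtain M :: "(nat \<Rightarrow> 'a) set" where M: "self_dual 2 M" by auto
  have Mc: "is_code 2 M" and MM: "M = dual_code 2 M" using M unfolding self_dual_def by auto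
  have "card M = card (UNIV::'a set)" using self_dual_card(2)[OF M] by simp
  hence "card M \<ge> 2" using card_UNIV_ge2[where 'a='a] by simp
  moreover have "card M \<le> 1" if "M \<subseteq> {\<lambda>_. 0}" using card_mono[OF _ that] by simp
  ultimately have "\<not> M \<subseteq> {\<lambda>_. 0}" by linarith
  then obtain x where x: "x \<in> M" "x \<noteq> (\<lambda>_. 0)" by auto
  have xx: "dot 2 x x = 0" using x(1) MM unfolding dual_code_def by blast
  have xv: "x \<in> vecs 2" using x(1) is_codeD(1)[OF Mc] by auto
  show False
  proof (cases "x 0 = 0")
    case True
    then have "x 1 * x 1 = 0" using xx unfolding dot2 by simp
    then have "x 1 = 0" by simp
    moreover have "x k = 0" if "k \<ge> 2" for k using xv that by (simp add: vecsD)
    ultimately have "x k = 0" for k using True by (cases "k = 0"; cases "k = 1") auto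
    then have "x = (\<lambda>_. 0)" by auto
    then show False using x by simp
  next
    case False
    have "(x 1 / x 0) * (x 1 / x 0) = (x 1 * x 1) / (x 0 * x 0)" by simp
    also have "x 1 * x 1 = - (x 0 * x 0)" using xx unfolding dot2 by (simp add: eq_neg_iff_add_eq_0 add.commute)
    finally have "(x 1 / x 0) * (x 1 / x 0) = -1" using False by simp
    then show False using assms by blast
  qed
qed



lemma functional_ext:
  fixes L :: "(nat \<Rightarrow> 'a::{finite,field}) set" and t :: nat
  assumes L: "is_code N L" and h: "\<And>x. x \<in> L \<Longrightarrow> (\<forall>j<t. dot N x (P j) = 0) \<Longrightarrow> dot N x p = 0"
  shows "\<exists>\<beta>. \<forall>x\<in>L. dot N x p = (\<Sum>j<t. \<beta> j * dot N x (P j))"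
proof -
  let ?q = "card (UNIV::'a set)"
  define F where "F = (\<lambda>x. (\<lambda>j. if j < t then dot N x (P j) else (0::'a)))"
  define G where "G = (\<lambda>x. (F x)(t := dot N x p))"
  define V where "V = F ` L"
  define \<Gamma> where "\<Gamma> = G ` L"
  have Fadd: "F (\<lambda>i. x i + y i) = (\<lambda>i. F x i + F y i)" for x y
    unfolding F_def by (auto simp: dot_add_left)
  have Fscale: "F (\<lambda>i. c * x i) = (\<lambda>i. c * F x i)" for c x
    unfolding F_def by (auto simp: dot_scale_left)
  have Gadd: "G (\<lambda>i. x i + y i) = (\<lambda>i. G x i + G y i)" for x y
    unfolding G_def by (auto simp: Fadd dot_add_left)
  have Gscale: "G (\<lambda>i. c * x i) = (\<lambda>i. c * G x i)" for c x
    unfolding G_def by (auto simp: Fscale dot_scale_left)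
  have F0: "F (\<lambda>_. 0) = (\<lambda>_. 0)" unfolding F_def by auto
  have G0: "G (\<lambda>_. 0) = (\<lambda>_. 0)" unfolding G_def F0 by auto
  have Fv: "F x \<in> vecs t" for x unfolding F_def vecs_def by auto
  have Gv: "G x \<in> vecs (Suc t)" for x unfolding G_def using Fv by (rule vecs_upd2)
  have Vc: "is_code t V" unfolding is_code_def V_def
  proof (intro conjI ballI allI)
    show "F ` L \<subseteq> vecs t" using Fv by auto
    show "(\<lambda>_. 0) \<in> F ` L" by (rule image_eqI[where f=F and x="\<lambda>_. 0", OF F0[symmetric] is_codeD(2)[OF L]])
  next
    fix x y assume "x \<in> F ` L" "y \<in> F ` L"
    then obtain x' y' where xy: "x' \<in> L" "y' \<in> L" "x = F x'" "y = F y'" by auto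
    have "(\<lambda>i. x i + y i) = F (\<lambda>i. x' i + y' i)" using xy Fadd by simp
    then show "(\<lambda>i. x i + y i) \<in> F ` L" by (rule image_eqI[where f=F and x="\<lambda>i. x' i + y' i", OF _ is_codeD(3)[OF L xy(1,2)]])
  next
    fix a x assume "x \<in> F ` L"
    then obtain x' where xy: "x' \<in> L" "x = F x'" by auto
    have "(\<lambda>i. a * x i) = F (\<lambda>i. a * x' i)" using xy Fscale by simp
    then show "(\<lambda>i. a * x i) \<in> F ` L" by (rule image_eqI[where f=F and x="\<lambda>i. a * x' i", OF _ is_codeD(4)[OF L xy(1)]])
  qed
  have Gc: "is_code (Suc t) \<Gamma>" unfolding is_code_def \<Gamma>_def
  proof (intro conjI ballI allI)
    show "G ` L \<subseteq> vecs (Suc t)" using Gv by auto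
    show "(\<lambda>_. 0) \<in> G ` L" by (rule image_eqI[where f=G and x="\<lambda>_. 0", OF G0[symmetric] is_codeD(2)[OF L]])
  next
    fix x y assume "x \<in> G ` L" "y \<in> G ` L"
    then obtain x' y' where xy: "x' \<in> L" "y' \<in> L" "x = G x'" "y = G y'" by auto
    have "(\<lambda>i. x i + y i) = G (\<lambda>i. x' i + y' i)" using xy Gadd by simp
    then show "(\<lambda>i. x i + y i) \<in> G ` L" by (rule image_eqI[where f=G and x="\<lambda>i. x' i + y' i", OF _ is_codeD(3)[OF L xy(1,2)]])
  next
    fix a x assume "x \<in> G ` L"
    then obtain x' where xy: "x' \<in> L" "x = G x'" by auto
    have "(\<lambda>i. a * x i) = G (\<lambda>i. a * x' i)" using xy Gscale by simp
    then show "(\<lambda>i. a * x i) \<in> G ` L" by (rule image_eqI[where f=G and x="\<lambda>i. a * x' i", OF _ is_codeD(4)[OF L xy(1)]])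
  qed
  have Fdet: "dot N x p = dot N x' p" if "x \<in> L" "x' \<in> L" "F x = F x'" for x x'
  proof -
    have d: "(\<lambda>i. x i - x' i) \<in> L" using code_diff[OF L that(1,2)] .
    have "\<forall>j<t. dot N (\<lambda>i. x i - x' i) (P j) = 0"
    proof (intro allI impI)
      fix j assume "j < t"
      then show "dot N (\<lambda>i. x i - x' i) (P j) = 0"
        using fun_cong[OF that(3), of j] unfolding F_def by (simp add: dot_diff_left)
    qed
    from h[OF d this] show ?thesis by (simp add: dot_diff_left)
  qed
  have cardGV: "card \<Gamma> = card V"
  proof -
    have "bij_betw (\<lambda>y. y(t := 0)) \<Gamma> V"
    proof (rule bij_betw_imageI)
      show "inj_on (\<lambda>y. y(t := 0)) \<Gamma>"
      proof (rule inj_onI)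
        fix y y' assume y: "y \<in> \<Gamma>" and y': "y' \<in> \<Gamma>" and e: "y(t := 0) = y'(t := 0)"
        obtain x where x: "x \<in> L" "y = G x" using y unfolding \<Gamma>_def by auto
        obtain x' where x': "x' \<in> L" "y' = G x'" using y' unfolding \<Gamma>_def by auto
        have "(G x)(t := 0) = F x" "(G x')(t := 0) = F x'" unfolding G_def F_def by auto
        hence "F x = F x'" using e x x' by simp
        then show "y = y'" using Fdet[OF x(1) x'(1)] x x' unfolding G_def by simp
      qed
      show "(\<lambda>y. y(t := 0)) ` \<Gamma> = V"
      proof -
        have "(G x)(t := 0) = F x" for x unfolding G_def F_def by auto
        then show ?thesis unfolding \<Gamma>_def V_def image_image by simp
      qed
    qed
    then show ?thesis by (rule bij_betw_same_card)
  qed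
  have dualeq: "{y \<in> dual_code (Suc t) \<Gamma>. y t = 0} = dual_code t V"
  proof -
    have dG: "dot (Suc t) y (G x) = dot t y (F x) + y t * dot N x p" for x y
    proof -
      have "dot t y (G x) = dot t y (F x)" by (rule dot_cong) (auto simp: G_def)
      then show ?thesis by (simp add: dot_Suc G_def)
    qed
    show ?thesis
    proof safe
      fix y assume y: "y \<in> dual_code (Suc t) \<Gamma>" "y t = 0"
      show "y \<in> dual_code t V" unfolding dual_code_def V_def
      proof (intro CollectI conjI ballI)
        show "y \<in> vecs t" using y vecs_Suc_zero unfolding dual_code_def by auto
        fix c assume "c \<in> F ` L"
        then obtain x where x: "x \<in> L" "c = F x" by auto
        have "G x \<in> \<Gamma>" using x unfolding \<Gamma>_def by auto
        then have "dot (Suc t) y (G x) = 0" using y unfolding dual_code_def by auto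
        then show "dot t y c = 0" using dG[of y x] y x by simp
      qed
    next
      fix y assume y: "y \<in> dual_code t V"
      show "y t = 0" using y unfolding dual_code_def by (auto simp: vecsD)
      show "y \<in> dual_code (Suc t) \<Gamma>" unfolding dual_code_def \<Gamma>_def
      proof (intro CollectI conjI ballI)
        show "y \<in> vecs (Suc t)" using y unfolding dual_code_def by (auto intro: vecs_mono)
        fix c assume "c \<in> G ` L"
        then obtain x where x: "x \<in> L" "c = G x" by auto
        have "dot t y (F x) = 0" using y x unfolding dual_code_def V_def by auto
        moreover have "y t = 0" using y unfolding dual_code_def by (auto simp: vecsD)
        ultimately show "dot (Suc t) y c = 0" using dG[of y x] x by simp
      qed
    qed
  qed
  obtain d where d: "d \<le> t" "card V = ?q ^ d" "card (dual_code t V) = ?q ^ (t - d)"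
    using code_dim[OF Vc] by blast
  obtain d' where d': "d' \<le> Suc t" "card \<Gamma> = ?q ^ d'" "card (dual_code (Suc t) \<Gamma>) = ?q ^ (Suc t - d')"
    using code_dim[OF Gc] by blast
  have q2: "2 \<le> ?q" by (rule card_UNIV_ge2)
  have "d' = d" using d d' cardGV q2 by (simp add: power_inject_exp)
  have "\<exists>y\<in>dual_code (Suc t) \<Gamma>. y t \<noteq> 0"
  proof (rule ccontr)
    assume "\<not> ?thesis"
    hence "dual_code (Suc t) \<Gamma> = {y \<in> dual_code (Suc t) \<Gamma>. y t = 0}" by auto
    hence "?q ^ (Suc t - d) = ?q ^ (t - d)" using d d' dualeq \<open>d' = d\<close> by simp
    hence "Suc t - d = t - d" using q2 by (simp add: power_inject_exp)
    then show False using d(1) by simp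
  qed
  then obtain y where y: "y \<in> dual_code (Suc t) \<Gamma>" "y t \<noteq> 0" by blast
  show ?thesis
  proof (rule exI[of _ "\<lambda>j. - y j / y t"], intro ballI)
    fix x assume x: "x \<in> L"
    have "G x \<in> \<Gamma>" using x unfolding \<Gamma>_def by auto
    then have "dot (Suc t) y (G x) = 0" using y unfolding dual_code_def by (auto simp: dot_commute)
    moreover have "dot t y (G x) = dot t y (F x)" by (rule dot_cong) (auto simp: G_def)
    moreover have "dot t y (F x) = (\<Sum>j<t. y j * dot N x (P j))" unfolding dot_def F_def by simp
    ultimately have e: "(\<Sum>j<t. y j * dot N x (P j)) + y t * dot N x p = 0"
      by (simp add: dot_Suc G_def)
    have "(\<Sum>j<t. - y j / y t * dot N x (P j)) = - (\<Sum>j<t. y j * dot N x (P j)) / y t"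
      by (simp add: sum_divide_distrib sum_negf)
    also have "\<dots> = dot N x p"
    proof -
      have "y t * dot N x p = - (\<Sum>j<t. y j * dot N x (P j))" using e by (simp add: add_eq_0_iff)
      hence "- (\<Sum>j<t. y j * dot N x (P j)) = y t * dot N x p" by simp
      then show ?thesis using y(2) by simp
    qed
    finally show "dot N x p = (\<Sum>j<t. - y j / y t * dot N x (P j))" by simp
  qed
qed



context blockc
begin

definition bu :: "(nat \<Rightarrow> 'a) \<Rightarrow> nat \<Rightarrow> 'a" where "bu \<beta> = (\<lambda>k. \<Sum>j<t. \<beta> j * u j k)"

definition psi :: "(nat \<Rightarrow> 'a) set \<Rightarrow> (nat \<Rightarrow> 'a) set" where
  "psi L = {w \<in> vecs m. \<exists>\<beta>. blk m w (bu \<beta>) \<in> L}"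

lemma bu_vecs: "bu \<beta> \<in> vecs s" unfolding bu_def by (rule vecs_sum) (use U1 in auto)

lemma bu_add: "bu (\<lambda>j. \<beta> j + \<beta>' j) = (\<lambda>k. bu \<beta> k + bu \<beta>' k)"
  unfolding bu_def by (auto simp: algebra_simps sum.distrib)

lemma bu_scale: "bu (\<lambda>j. c * \<beta> j) = (\<lambda>k. c * bu \<beta> k)"
  unfolding bu_def by (auto simp: algebra_simps sum_distrib_left)

lemma bu_zero: "bu (\<lambda>_. 0) = (\<lambda>_. 0)" unfolding bu_def by simp

lemma dot_bu_u: "j < t \<Longrightarrow> dot s (bu \<beta>) (u j) = 0"
  unfolding bu_def by (simp only: dot_sum_left dot_scale_left) (simp add: U2)

lemma dot_bu_bu: "dot s (bu \<beta>) (bu \<beta>') = 0"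
proof -
  have "dot s (bu \<beta>) (bu \<beta>') = (\<Sum>j<t. \<beta>' j * dot s (bu \<beta>) (u j))"
    unfolding bu_def[of \<beta>'] by (simp only: dot_sum_right dot_scale_right)
  also have "\<dots> = 0" by (rule sum.neutral) (simp add: dot_bu_u)
  finally show ?thesis .
qed

lemma psi_self_dual:
  assumes L: "self_dual (m+s) L"
  shows "self_dual m (psi L)"
proof -
  have Lc: "is_code (m+s) L" and LL: "L = dual_code (m+s) L" using L unfolding self_dual_def by auto
  have Lo: "dot (m+s) x y = 0" if "x \<in> L" "y \<in> L" for x y using that LL unfolding dual_code_def by blast
  have pc: "is_code m (psi L)" unfolding is_code_def
  proof (intro conjI ballI allI)
    show "psi L \<subseteq> vecs m" unfolding psi_def by auto
    have "blk m (\<lambda>_. 0) (bu (\<lambda>_. 0)) = (\<lambda>_. 0)" unfolding bu_zero blk_def by auto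
    then have "\<exists>\<beta>. blk m (\<lambda>_. 0) (bu \<beta>) \<in> L" using is_codeD(2)[OF Lc] by (intro exI[of _ "\<lambda>_. 0"]) simp
    then show "(\<lambda>_. 0) \<in> psi L" unfolding psi_def by simp
  next
    fix x y assume x: "x \<in> psi L" and y: "y \<in> psi L"
    obtain \<beta> where b: "x \<in> vecs m" "blk m x (bu \<beta>) \<in> L" using x unfolding psi_def by auto
    obtain \<beta>' where b': "y \<in> vecs m" "blk m y (bu \<beta>') \<in> L" using y unfolding psi_def by auto
    have "blk m (\<lambda>i. x i + y i) (bu (\<lambda>j. \<beta> j + \<beta>' j)) = (\<lambda>k. blk m x (bu \<beta>) k + blk m y (bu \<beta>') k)"
      unfolding bu_add blk_add ..
    also have "\<dots> \<in> L" by (rule is_codeD(3)[OF Lc b(2) b'(2)])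
    finally show "(\<lambda>i. x i + y i) \<in> psi L" unfolding psi_def using vecs_add[OF b(1) b'(1)] by blast
  next
    fix a x assume x: "x \<in> psi L"
    obtain \<beta> where b: "x \<in> vecs m" "blk m x (bu \<beta>) \<in> L" using x unfolding psi_def by auto
    have "blk m (\<lambda>i. a * x i) (bu (\<lambda>j. a * \<beta> j)) = (\<lambda>k. a * blk m x (bu \<beta>) k)"
      unfolding bu_scale blk_scale ..
    also have "\<dots> \<in> L" by (rule is_codeD(4)[OF Lc b(2)])
    finally show "(\<lambda>i. a * x i) \<in> psi L" unfolding psi_def using vecs_scale[OF b(1)] by blast
  qed
  have po: "dot m w w' = 0" if hw: "w \<in> psi L" "w' \<in> psi L" for w w'
  proof -
    obtain \<beta> where b: "blk m w (bu \<beta>) \<in> L" using hw(1) unfolding psi_def by auto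
    obtain \<beta>' where b': "blk m w' (bu \<beta>') \<in> L" using hw(2) unfolding psi_def by auto
    have "dot (m+s) (blk m w (bu \<beta>)) (blk m w' (bu \<beta>')) = dot m w w'"
      unfolding dot_blk dot_bu_bu by simp
    then show ?thesis using Lo[OF b b'] by simp
  qed
  have pd: "dual_code m (psi L) \<subseteq> psi L"
  proof
    fix w assume w: "w \<in> dual_code m (psi L)"
    have wv: "w \<in> vecs m" and wo: "\<And>c. c \<in> psi L \<Longrightarrow> dot m w c = 0" using w unfolding dual_code_def by auto
    have wblk: "w = blk m w (\<lambda>_. 0)" using wv unfolding blk_def by (auto simp: vecsD)
    have decomp: "\<exists>a b. x = blk m a b \<and> a \<in> vecs m \<and> b \<in> vecs s" if hx: "x \<in> L" for x
      using blk_decomp[of x m s] hx is_codeD(1)[OF Lc] by blast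
    have hyp: "dot (m+s) x w = 0" if x: "x \<in> L" and p: "\<forall>j<t. dot (m+s) x (UU j) = 0" for x
    proof -
      obtain a b where ab: "x = blk m a b" "a \<in> vecs m" "b \<in> vecs s" using decomp[OF x] by blast
      have "\<forall>j<t. dot s b (u j) = 0" using p unfolding ab UU_def dot_blk by simp
      from U3[OF ab(3) this] obtain \<alpha> where "b = bu \<alpha>" unfolding bu_def by blast
      then have "a \<in> psi L" using x ab unfolding psi_def by auto
      then have "dot m w a = 0" by (rule wo)
      moreover have "dot (m+s) x w = dot m a w"
        by (subst wblk) (simp add: ab dot_blk)
      ultimately show ?thesis by (simp add: dot_commute)
    qed
    obtain \<beta> where \<beta>: "\<forall>x\<in>L. dot (m+s) x w = (\<Sum>j<t. \<beta> j * dot (m+s) x (UU j))"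
      using functional_ext[OF Lc hyp] by blast
    define z where "z = blk m w (bu (\<lambda>j. - \<beta> j))"
    have zv: "z \<in> vecs (m+s)" unfolding z_def by (rule blk_vecs[OF wv bu_vecs])
    have "dot (m+s) z x = 0" if x: "x \<in> L" for x
    proof -
      obtain a b where ab: "x = blk m a b" "a \<in> vecs m" "b \<in> vecs s" using decomp[OF x] by blast
      have e1: "dot (m+s) x w = dot m a w" by (subst wblk) (simp add: ab dot_blk)
      have e2: "dot (m+s) x (UU j) = dot s b (u j)" for j unfolding ab UU_def dot_blk by simp
      have "dot (m+s) z x = dot m w a + dot s (bu (\<lambda>j. - \<beta> j)) b" unfolding z_def ab dot_blk ..
      also have "dot s (bu (\<lambda>j. - \<beta> j)) b = - (\<Sum>j<t. \<beta> j * dot s b (u j))"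
        unfolding bu_def by (simp only: dot_sum_left dot_scale_left) (simp add: dot_commute sum_negf)
      also have "(\<Sum>j<t. \<beta> j * dot s b (u j)) = dot m a w" using \<beta> x e1 e2 by simp
      finally show ?thesis by (simp add: dot_commute)
    qed
    then have "z \<in> dual_code (m+s) L" unfolding dual_code_def using zv by auto
    then have "z \<in> L" using LL by simp
    then show "w \<in> psi L" unfolding psi_def z_def using wv by auto
  qed
  have "psi L \<subseteq> dual_code m (psi L)" using po pc unfolding dual_code_def is_code_def by auto
  then show ?thesis using pd pc unfolding self_dual_def by auto
qed

end



definition msk :: "nat set \<Rightarrow> (nat \<Rightarrow> 'a::field) \<Rightarrow> nat \<Rightarrow> 'a" where
  "msk A c = (\<lambda>i. if i \<in> A then c i else 0)"

definition proj :: "(nat \<Rightarrow> nat) \<Rightarrow> nat \<Rightarrow> (nat \<Rightarrow> 'a::field) \<Rightarrow> nat \<Rightarrow> 'a" where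
  "proj e k c = (\<lambda>i. if i < k then c (e i) else 0)"

lemma dot_msk:
  assumes "A \<subseteq> {..<n}"
  shows "dot n (msk A c) (msk A c') = (\<Sum>j\<in>A. c j * c' j)"
proof -
  have "dot n (msk A c) (msk A c') = (\<Sum>j<n. if j \<in> A then c j * c' j else 0)"
    unfolding dot_def msk_def by (rule sum.cong) auto
  also have "\<dots> = (\<Sum>j\<in>{..<n} \<inter> A. c j * c' j)" by (simp add: sum.inter_restrict)
  also have "{..<n} \<inter> A = A" using assms by auto
  finally show ?thesis .
qed

lemma dot_proj:
  assumes e: "bij_betw e {..<k} A"
  shows "dot k (proj e k c) (proj e k c') = (\<Sum>j\<in>A. c j * c' j)"
proof -
  have "dot k (proj e k c) (proj e k c') = (\<Sum>i<k. c (e i) * c' (e i))"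
    unfolding dot_def proj_def by simp
  also have "\<dots> = (\<Sum>j\<in>A. c j * c' j)" by (rule sum.reindex_bij_betw[OF e])
  finally show ?thesis .
qed

lemma proj_eq_on:
  assumes e: "bij_betw e {..<k} A" and p: "proj e k c = proj e k c'" and j: "j \<in> A"
  shows "c j = c' j"
proof -
  obtain i where i: "i < k" "e i = j" using e j unfolding bij_betw_def by auto
  show ?thesis using fun_cong[OF p, of i] i unfolding proj_def by simp
qed

lemma split_sd:
  fixes C :: "(nat \<Rightarrow> 'a::{finite,field}) set"
  assumes C: "self_dual n C" and A: "A \<subseteq> {..<n}" and e: "bij_betw e {..<k} A"
    and sp: "\<And>c. c \<in> C \<Longrightarrow> msk A c \<in> C"
  shows "self_dual k (proj e k ` C)"
proof -
  have Cc: "is_code n C" and CC: "C = dual_code n C" using C unfolding self_dual_def by auto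
  have Co: "dot n x y = 0" if "x \<in> C" "y \<in> C" for x y using that CC unfolding dual_code_def by blast
  have pc: "is_code k (proj e k ` C)" unfolding is_code_def
  proof (intro conjI ballI allI)
    show "proj e k ` C \<subseteq> vecs k" unfolding proj_def vecs_def by auto
    show "(\<lambda>_. 0) \<in> proj e k ` C"
      by (rule image_eqI[where x="\<lambda>_. 0"]) (auto simp: proj_def is_codeD(2)[OF Cc])
  next
    fix x y assume "x \<in> proj e k ` C" "y \<in> proj e k ` C"
    then obtain x' y' where xy: "x' \<in> C" "y' \<in> C" "x = proj e k x'" "y = proj e k y'" by auto
    show "(\<lambda>i. x i + y i) \<in> proj e k ` C"
      by (rule image_eqI[where x="\<lambda>i. x' i + y' i"]) (auto simp: xy proj_def is_codeD(3)[OF Cc])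
  next
    fix a x assume "x \<in> proj e k ` C"
    then obtain x' where xy: "x' \<in> C" "x = proj e k x'" by auto
    show "(\<lambda>i. a * x i) \<in> proj e k ` C"
      by (rule image_eqI[where x="\<lambda>i. a * x' i"]) (auto simp: xy proj_def is_codeD(4)[OF Cc])
  qed
  have po: "dot k x y = 0" if hxy: "x \<in> proj e k ` C" "y \<in> proj e k ` C" for x y
  proof -
    obtain x' where x': "x' \<in> C" "x = proj e k x'" using hxy(1) by auto
    obtain y' where y': "y' \<in> C" "y = proj e k y'" using hxy(2) by auto
    have "dot k x y = dot n (msk A x') (msk A y')"
      unfolding x'(2) y'(2) dot_proj[OF e] dot_msk[OF A] ..
    also have "\<dots> = 0" using Co[OF sp[OF x'(1)] sp[OF y'(1)]] .
    finally show ?thesis .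
  qed
  have pd: "dual_code k (proj e k ` C) \<subseteq> proj e k ` C"
  proof
    fix x assume x: "x \<in> dual_code k (proj e k ` C)"
    have xv: "x \<in> vecs k" and xo: "\<And>c. c \<in> C \<Longrightarrow> dot k x (proj e k c) = 0"
      using x unfolding dual_code_def by auto
    define ie where "ie = inv_into {..<k} e"
    have ie: "\<And>i. i < k \<Longrightarrow> ie (e i) = i" unfolding ie_def using e
      by (simp add: bij_betw_def inv_into_f_f)
    define X where "X = (\<lambda>j. if j \<in> A then x (ie j) else 0)"
    have Xv: "X \<in> vecs n" unfolding X_def vecs_def using A by auto
    have "dot n X c = 0" if c: "c \<in> C" for c
    proof -
      have "dot n X c = (\<Sum>j<n. if j \<in> A then x (ie j) * c j else 0)"
        unfolding dot_def X_def by (rule sum.cong) auto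
      also have "\<dots> = (\<Sum>j\<in>{..<n} \<inter> A. x (ie j) * c j)" by (simp add: sum.inter_restrict)
      also have "{..<n} \<inter> A = A" using A by auto
      also have "(\<Sum>j\<in>A. x (ie j) * c j) = (\<Sum>i<k. x (ie (e i)) * c (e i))"
        by (rule sum.reindex_bij_betw[OF e, symmetric])
      also have "\<dots> = (\<Sum>i<k. x i * c (e i))" using ie by simp
      also have "\<dots> = dot k x (proj e k c)" unfolding dot_def proj_def by simp
      also have "\<dots> = 0" by (rule xo[OF c])
      finally show ?thesis .
    qed
    then have "X \<in> dual_code n C" unfolding dual_code_def using Xv by auto
    then have XC: "X \<in> C" using CC by simp
    have "proj e k X = x"
    proof
      fix i show "proj e k X i = x i"
      proof (cases "i < k")
        case True
        then have "e i \<in> A" using e unfolding bij_betw_def by auto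
        then show ?thesis using True ie unfolding proj_def X_def by simp
      next
        case False then show ?thesis using xv unfolding proj_def by (simp add: vecsD)
      qed
    qed
    then show "x \<in> proj e k ` C" using XC by blast
  qed
  have "proj e k ` C \<subseteq> dual_code k (proj e k ` C)" using po pc unfolding dual_code_def is_code_def by auto
  then show ?thesis using pd pc unfolding self_dual_def by auto
qed

lemma split_recon:
  fixes C :: "(nat \<Rightarrow> 'a::{finite,field}) set"
  assumes C: "is_code n C" and A: "A \<subseteq> {..<n}" and e: "bij_betw e {..<k} A"
    and e': "bij_betw e' {..<k'} ({..<n} - A)"
    and sp: "\<And>c. c \<in> C \<Longrightarrow> msk A c \<in> C"
  shows "C = {c \<in> vecs n. proj e k c \<in> proj e k ` C \<and> proj e' k' c \<in> proj e' k' ` C}"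
proof safe
  fix c assume "c \<in> C" then show "c \<in> vecs n" using is_codeD(1)[OF C] by auto
next
  fix c c' c'' assume c: "c \<in> vecs n" and c': "c' \<in> C" and c'': "c'' \<in> C"
    and p1: "proj e k c = proj e k c'" and p2: "proj e' k' c = proj e' k' c''"
  have mB: "msk ({..<n} - A) c'' \<in> C"
  proof -
    have "msk ({..<n} - A) c'' = (\<lambda>i. c'' i - msk A c'' i)"
    proof
      fix i
      have "c'' \<in> vecs n" using c'' is_codeD(1)[OF C] by auto
      then show "msk ({..<n} - A) c'' i = c'' i - msk A c'' i"
        unfolding msk_def by (cases "i < n") (auto simp: vecsD)
    qed
    then show ?thesis using code_diff[OF C c'' sp[OF c'']] by simp
  qed
  have "c = (\<lambda>i. msk A c' i + msk ({..<n} - A) c'' i)"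
  proof
    fix j show "c j = msk A c' j + msk ({..<n} - A) c'' j"
    proof (cases "j \<in> A")
      case True then show ?thesis using proj_eq_on[OF e p1 True] unfolding msk_def by simp
    next
      case nA: False
      show ?thesis
      proof (cases "j < n")
        case True then have "j \<in> {..<n} - A" using nA by auto
        then show ?thesis using proj_eq_on[OF e' p2] nA unfolding msk_def by simp
      next
        case False then show ?thesis using c nA unfolding msk_def by (simp add: vecsD)
      qed
    qed
  qed
  then show "c \<in> C" using is_codeD(3)[OF C sp[OF c'] mB] by simp
qed auto

lemma dec_split:
  fixes C :: "(nat \<Rightarrow> 'a::{finite,field}) set"
  assumes d: "decomposable n C"
  shows "\<exists>A. A \<subseteq> {..<n} \<and> 0 < card A \<and> card A < n \<and> (\<forall>c\<in>C. msk A c \<in> C)"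
proof -
  obtain \<sigma> n1 n2 and C1 C2 :: "(nat \<Rightarrow> 'a) set" where
    s: "\<sigma> permutes {..<n}" and n: "0 < n1" "0 < n2" "n1 + n2 = n"
    and C1: "is_code n1 C1" and C2: "is_code n2 C2"
    and P: "perm_code \<sigma> C = direct_sum n1 C1 C2"
    using d unfolding decomposable_def by blast
  define A where "A = \<sigma> ` {..<n1}"
  have inj: "inj \<sigma>" using permutes_inj[OF s] .
  have A_iff: "\<sigma> i \<in> A \<longleftrightarrow> i < n1" for i unfolding A_def using inj by (auto simp: inj_eq)
  have Asub: "A \<subseteq> {..<n}"
  proof
    fix j assume "j \<in> A"
    then obtain i where i: "i < n1" "j = \<sigma> i" unfolding A_def by auto
    have "\<sigma> i \<in> {..<n} \<longleftrightarrow> i \<in> {..<n}" by (rule permutes_in_image[OF s])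
    then show "j \<in> {..<n}" using i n by auto
  qed
  have cA: "card A = n1" unfolding A_def using inj by (simp add: card_image inj_on_subset)
  have "\<forall>c\<in>C. msk A c \<in> C"
  proof
    fix c assume c: "c \<in> C"
    have "c \<circ> \<sigma> \<in> direct_sum n1 C1 C2" using P c unfolding perm_code_def by auto
    then obtain c1 c2 where cc: "c1 \<in> C1" "c2 \<in> C2" "c \<circ> \<sigma> = (\<lambda>i. if i < n1 then c1 i else c2 (i - n1))"
      unfolding direct_sum_def by auto
    have "msk A c \<circ> \<sigma> = (\<lambda>i. if i < n1 then c1 i else (\<lambda>_. 0) (i - n1))"
    proof
      fix i show "(msk A c \<circ> \<sigma>) i = (if i < n1 then c1 i else (\<lambda>_. 0) (i - n1))"
        using fun_cong[OF cc(3), of i] A_iff[of i] unfolding msk_def by auto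
    qed
    moreover have "(\<lambda>i. if i < n1 then c1 i else (\<lambda>_. 0) (i - n1)) \<in> direct_sum n1 C1 C2"
      unfolding direct_sum_def mem_Collect_eq
      by (rule exI[of _ c1], rule exI[of _ "\<lambda>_. 0"]) (simp add: cc(1) is_codeD(2)[OF C2])
    ultimately have "msk A c \<circ> \<sigma> \<in> perm_code \<sigma> C" using P by simp
    then obtain c' where c': "c' \<in> C" "msk A c \<circ> \<sigma> = c' \<circ> \<sigma>" unfolding perm_code_def by auto
    have "msk A c = c'"
    proof
      fix j
      obtain i where "\<sigma> i = j" using permutes_surj[OF s] by (metis surjD)
      then show "msk A c j = c' j" using fun_cong[OF c'(2), of i] by simp
    qed
    then show "msk A c \<in> C" using c' by simp
  qed
  then show ?thesis using Asub cA n by (intro exI[of _ A]) auto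
qed



definition bijf :: "nat set \<Rightarrow> nat \<Rightarrow> nat" where
  "bijf A = (SOME e. bij_betw e {..<card A} A)"

lemma bijf: "finite A \<Longrightarrow> bij_betw (bijf A) {..<card A} A"
proof -
  assume "finite A"
  then obtain h where "bij_betw h {0..<card A} A" using ex_bij_betw_nat_finite by blast
  then have "\<exists>e. bij_betw e {..<card A} A" by (auto simp: atLeast0LessThan)
  then show ?thesis unfolding bijf_def by (rule someI_ex)
qed

lemma finite_sdg: "finite {M :: (nat \<Rightarrow> 'a::{finite,field}) set. self_dual n M}"
  by (rule finite_subset[OF _ finite_codes[of n]]) (auto simp: self_dual_def)

lemma dec_count:
  "card {C::(nat\<Rightarrow>'a::{finite,field}) set. self_dual n C \<and> decomposable n C}
    \<le> (\<Sum>k\<in>{1..<n}. (n choose k) * (card {M::(nat\<Rightarrow>'a) set. self_dual k M} * card {M::(nat\<Rightarrow>'a) set. self_dual (n-k) M}))"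
proof -
  let ?G = "\<lambda>k. card {M::(nat\<Rightarrow>'a) set. self_dual k M}"
  let ?SD = "\<lambda>k. {M::(nat\<Rightarrow>'a) set. self_dual k M}"
  let ?Dec = "{C::(nat\<Rightarrow>'a) set. self_dual n C \<and> decomposable n C}"
  define AA where "AA = {A. A \<subseteq> {..<n} \<and> 0 < card A \<and> card A < n}"
  define B where "B = (\<lambda>A. {..<n} - A)"
  define R where "R = (\<lambda>A. \<lambda>(P1, P2). {c::nat\<Rightarrow>'a. c \<in> vecs n \<and> proj (bijf A) (card A) c \<in> P1 \<and>
                                         proj (bijf (B A)) (card (B A)) c \<in> P2})"
  have fAA: "finite AA" unfolding AA_def by (rule finite_subset[of _ "Pow {..<n}"]) auto
  have cB: "card (B A) = n - card A" if "A \<in> AA" for A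
  proof -
    have "A \<subseteq> {..<n}" using that unfolding AA_def by auto
    moreover have "finite A" using calculation finite_subset by blast
    ultimately show ?thesis unfolding B_def by (simp add: card_Diff_subset)
  qed
  have sub: "?Dec \<subseteq> (\<Union>A\<in>AA. R A ` (?SD (card A) \<times> ?SD (card (B A))))"
  proof
    fix C assume "C \<in> ?Dec"
    then have C: "self_dual n C" and d: "decomposable n C" by auto
    have Cc: "is_code n C" using C unfolding self_dual_def by auto
    obtain A where A: "A \<subseteq> {..<n}" "0 < card A" "card A < n" and sp: "\<forall>c\<in>C. msk A c \<in> C"
      using dec_split[OF d] by blast
    have AA: "A \<in> AA" unfolding AA_def using A by auto
    have fA: "finite A" using A(1) finite_subset by blast
    have spB: "msk (B A) c \<in> C" if c: "c \<in> C" for c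
    proof -
      have "msk (B A) c = (\<lambda>i. c i - msk A c i)"
      proof
        fix i
        have "c \<in> vecs n" using c is_codeD(1)[OF Cc] by auto
        then show "msk (B A) c i = c i - msk A c i"
          unfolding msk_def B_def by (cases "i < n") (auto simp: vecsD)
      qed
      then show ?thesis using code_diff[OF Cc c] sp c by simp
    qed
    have BA: "B A \<subseteq> {..<n}" unfolding B_def by auto
    have fB: "finite (B A)" unfolding B_def by simp
    have s1: "proj (bijf A) (card A) ` C \<in> ?SD (card A)"
      using split_sd[OF C A(1) bijf[OF fA]] sp by auto
    have s2: "proj (bijf (B A)) (card (B A)) ` C \<in> ?SD (card (B A))"
      using split_sd[OF C BA bijf[OF fB]] spB by auto
    have "C = R A (proj (bijf A) (card A) ` C, proj (bijf (B A)) (card (B A)) ` C)"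
      unfolding R_def using split_recon[OF Cc A(1) bijf[OF fA] bijf[OF fB[unfolded B_def]]] sp
      unfolding B_def by auto
    then show "C \<in> (\<Union>A\<in>AA. R A ` (?SD (card A) \<times> ?SD (card (B A))))"
      using AA s1 s2 by blast
  qed
  have "card ?Dec \<le> card (\<Union>A\<in>AA. R A ` (?SD (card A) \<times> ?SD (card (B A))))"
    by (rule card_mono[OF _ sub]) (use fAA finite_sdg in auto)
  also have "\<dots> \<le> (\<Sum>A\<in>AA. card (R A ` (?SD (card A) \<times> ?SD (card (B A)))))"
    by (rule card_UN_le[OF fAA])
  also have "\<dots> \<le> (\<Sum>A\<in>AA. ?G (card A) * ?G (n - card A))"
  proof (rule sum_mono)
    fix A assume A: "A \<in> AA"
    have "card (R A ` (?SD (card A) \<times> ?SD (card (B A)))) \<le> card (?SD (card A) \<times> ?SD (card (B A)))"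
      by (rule card_image_le) (intro finite_cartesian_product finite_sdg)
    also have "\<dots> = ?G (card A) * ?G (n - card A)" using cB[OF A] by (simp add: card_cartesian_product)
    finally show "card (R A ` (?SD (card A) \<times> ?SD (card (B A)))) \<le> ?G (card A) * ?G (n - card A)" .
  qed
  also have "\<dots> = (\<Sum>k\<in>{1..<n}. (\<Sum>A\<in>{A\<in>AA. card A = k}. ?G (card A) * ?G (n - card A)))"
    by (rule sum.group[symmetric, OF fAA]) (auto simp: AA_def)
  also have "\<dots> = (\<Sum>k\<in>{1..<n}. (n choose k) * (?G k * ?G (n - k)))"
  proof (rule sum.cong[OF refl])
    fix k assume k: "k \<in> {1..<n}"
    have "{A\<in>AA. card A = k} = {A. A \<subseteq> {..<n} \<and> card A = k}" using k unfolding AA_def by auto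
    moreover have "card {A. A \<subseteq> {..<n} \<and> card A = k} = n choose k" using n_subsets[of "{..<n}" k] by simp
    ultimately show "(\<Sum>A\<in>{A\<in>AA. card A = k}. ?G (card A) * ?G (n - card A)) = (n choose k) * (?G k * ?G (n - k))"
      by simp
  qed
  finally show ?thesis .
qed



lemma G_def: "num_sd (F::'a::{finite,field} itself) n = card {M::(nat\<Rightarrow>'a) set. self_dual n M}"
  by (simp add: num_sd_def)

lemma T_sum: "(2::nat) * (\<Sum>j<(n::nat). j) = n * (n - 1)"
proof (induction n)
  case 0 then show ?case by simp
next
  case (Suc n) then show ?case by (cases n) (auto simp: algebra_simps)
qed

lemma G_odd: "odd n \<Longrightarrow> num_sd (F::'a::{finite,field} itself) n = 0"
proof -
  assume "odd n"
  then have e: "{M::(nat\<Rightarrow>'a) set. self_dual n M} = {}" using self_dual_card(1) by blast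
  show ?thesis unfolding G_def e by simp
qed

lemma G_up: "num_sd (F::'a::{finite,field} itself) (2*k) \<le> 4^k * card (UNIV::'a set) ^ (k*k+k)"
proof -
  let ?q = "card (UNIV::'a set)"
  have sub: "{M::(nat\<Rightarrow>'a) set. self_dual (2*k) M} \<subseteq> codes_card (2*k) k"
  proof (rule subsetI)
    fix M :: "(nat\<Rightarrow>'a) set" assume "M \<in> {M::(nat\<Rightarrow>'a) set. self_dual (2*k) M}"
    then have sd: "self_dual (2*k) M" by simp
    have "card M = ?q ^ k" using self_dual_card(2)[OF sd] by simp
    then show "M \<in> codes_card (2*k) k" using sd by (simp add: codes_card_def self_dual_def)
  qed
  have "num_sd F (2*k) \<le> card (codes_card (2*k) k :: (nat\<Rightarrow>'a) set set)"
    unfolding G_def by (rule card_mono[OF finite_codes_card sub])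
  hence "num_sd F (2*k) * ?q ^ (k*k) \<le> 2 ^ (2*k) * ?q ^ (k*(2*k) + k)"
    using grassmann[of "2*k" k, where 'a='a] by (meson le_trans mult_le_mono1)
  also have "\<dots> = (4^k * ?q ^ (k*k+k)) * ?q ^ (k*k)"
  proof -
    have "(2::nat) ^ (2*k) = 4^k" by (simp add: power_mult)
    moreover have "?q ^ (k*(2*k) + k) = ?q ^ (k*k+k) * ?q ^ (k*k)"
    proof -
      have "k*(2*k) + k = (k*k+k) + k*k" by (simp add: algebra_simps)
      then show ?thesis by (simp only: power_add)
    qed
    ultimately show ?thesis by simp
  qed
  finally show ?thesis using card_UNIV_ge2[where 'a='a] by simp
qed

subsection \<open>Case: -1 is a square\<close>

lemma stepS:
  assumes a: "(a::'a::{finite,field}) * a = -1" and j: "1 \<le> j"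
  shows "num_sd (F::'a itself) (2*j) * card (UNIV::'a set) ^ (j - 1) \<le> num_sd F (2*j+2)"
proof -
  let ?q = "card (UNIV::'a set)"
  interpret B: blockc "2*j" 2 1 "u2 a" by (rule blockc2[OF a])
  have c: "num_sd F (2*j) * card B.Dom \<le> num_sd F (2*j+2) * (?q ^ (2*j div 2)) ^ 1" unfolding G_def using B.count by simp
  have d: "?q ^ (2*j - 1) \<le> card B.Dom" using dom2_card[OF a, of "2*j"] j by simp
  have e: "?q ^ (j - 1) * ?q ^ j = ?q ^ (2*j - 1)"
  proof -
    have "j - 1 + j = 2*j - 1" using j by simp
    then show ?thesis by (metis power_add)
  qed
  have "num_sd F (2*j) * ?q ^ (j - 1) * ?q ^ j = num_sd F (2*j) * ?q ^ (2*j - 1)"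
    by (simp only: mult.assoc e)
  also have "\<dots> \<le> num_sd F (2*j) * card B.Dom" using d by simp
  also have "\<dots> \<le> num_sd F (2*j+2) * ?q ^ j" using c by simp
  finally show ?thesis using card_UNIV_ge2[where 'a='a] by simp
qed

lemma chainS:
  assumes a: "(a::'a::{finite,field}) * a = -1" and k2: "1 \<le> k2"
  shows "num_sd (F::'a itself) (2*k2) * card (UNIV::'a set) ^ (\<Sum>j<i. k2 + j - 1) \<le> num_sd F (2*(k2+i))"
proof (induction i)
  case 0 then show ?case by simp
next
  case (Suc i)
  let ?q = "card (UNIV::'a set)"
  have "num_sd F (2*k2) * ?q ^ (\<Sum>j<Suc i. k2 + j - 1) = (num_sd F (2*k2) * ?q ^ (\<Sum>j<i. k2 + j - 1)) * ?q ^ (k2 + i - 1)"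
    by (simp add: power_add algebra_simps)
  also have "\<dots> \<le> num_sd F (2*(k2+i)) * ?q ^ (k2 + i - 1)" using Suc by simp
  also have "\<dots> \<le> num_sd F (2*(k2+i)+2)" using stepS[OF a, where j="k2+i" and F=F] k2 by simp
  finally show ?case by simp
qed

lemma chain_commonS:
  assumes a: "(a::'a::{finite,field}) * a = -1" and k1: "1 \<le> k1" and k12: "k1 \<le> k2"
  shows "num_sd (F::'a itself) (2*k1) * num_sd F (2*k2) * card (UNIV::'a set) ^ (k1*k2 + (\<Sum>j<k1. j))
          \<le> num_sd F (2*k1) * num_sd F (2*(k1+k2)) * card (UNIV::'a set) ^ k1"
proof -
  let ?q = "card (UNIV::'a set)"
  have k2: "1 \<le> k2" using k1 k12 by simp
  have e: "(\<Sum>j<k1. k2 + j - 1) + k1 = k1*k2 + (\<Sum>j<k1. j)"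
  proof -
    have "(\<Sum>j<k1. k2 + j) = (\<Sum>j<k1. (k2 + j - 1) + 1)" using k2 by (intro sum.cong) auto
    also have "\<dots> = (\<Sum>j<k1. k2 + j - 1) + k1" by (simp only: sum.distrib) simp
    finally have "(\<Sum>j<k1. k2 + j - 1) + k1 = (\<Sum>j<k1. k2 + j)" by simp
    also have "\<dots> = k1*k2 + (\<Sum>j<k1. j)" by (simp add: sum.distrib)
    finally show ?thesis .
  qed
  have "num_sd F (2*k1) * num_sd F (2*k2) * ?q ^ (k1*k2 + (\<Sum>j<k1. j)) =
        num_sd F (2*k1) * (num_sd F (2*k2) * ?q ^ (\<Sum>j<k1. k2 + j - 1)) * ?q ^ k1"
    unfolding e[symmetric] by (simp add: power_add algebra_simps)
  also have "\<dots> \<le> num_sd F (2*k1) * num_sd F (2*(k2+k1)) * ?q ^ k1"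
    using chainS[OF a k2, where i=k1 and F=F] by simp
  finally show ?thesis by (simp add: add.commute)
qed

subsection \<open>Case: -1 is not a square\<close>

lemma two_ne0: "\<not> (\<exists>a::'a::field. a * a = -1) \<Longrightarrow> (2::'a) \<noteq> 0"
proof
  assume "\<not> (\<exists>a::'a. a * a = -1)" "(2::'a) = 0"
  then have "(1::'a) * 1 = -1" by (metis add_eq_0_iff mult_1 one_add_one)
  then show False using \<open>\<not> _\<close> by blast
qed

lemma stepN:
  assumes n: "\<not> (\<exists>a::'a::{finite,field}. a * a = -1)" and m: "even m"
  shows "num_sd (F::'a itself) m * card (UNIV::'a set) ^ m \<le> num_sd F (m+4)"
proof -
  let ?q = "card (UNIV::'a set)"
  obtain b c :: 'a where bc: "b * b + c * c = -1" using two_squares by blast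
  interpret B: blockc m 4 2 "u4 b c" by (rule blockc4[OF bc])
  have c: "num_sd F m * card B.Dom \<le> num_sd F (m+4) * (?q ^ (m div 2)) ^ 2" unfolding G_def using B.count by simp
  have d: "?q ^ (2*m) \<le> card B.Dom" by (rule dom4_card[OF bc two_ne0[OF n]])
  have K: "(?q ^ (m div 2)) ^ 2 = ?q ^ m" using m by (simp add: power_mult[symmetric])
  have "num_sd F m * ?q ^ m * ?q ^ m = num_sd F m * ?q ^ (2*m)" by (simp add: power_add[symmetric] mult_2 mult.assoc)
  also have "\<dots> \<le> num_sd F m * card B.Dom" using d by simp
  also have "\<dots> \<le> num_sd F (m+4) * ?q ^ m" using c K by simp
  finally show ?thesis using card_UNIV_ge2[where 'a='a] by simp
qed

lemma propN:
  assumes n: "\<not> (\<exists>a::'a::{finite,field}. a * a = -1)" and G4: "num_sd (F::'a itself) (m+4) \<noteq> 0"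
  shows "num_sd F m \<noteq> 0"
proof -
  obtain b c :: 'a where bc: "b * b + c * c = -1" using two_squares by blast
  interpret B: blockc m 4 2 "u4 b c" by (rule blockc4[OF bc])
  have ne: "{L::(nat\<Rightarrow>'a) set. self_dual (m+4) L} \<noteq> {}"
  proof
    assume "{L::(nat\<Rightarrow>'a) set. self_dual (m+4) L} = {}"
    then have "num_sd F (m+4) = 0" by (simp only: G_def card.empty)
    then show False using G4 by simp
  qed
  then obtain L :: "(nat \<Rightarrow> 'a) set" where L: "self_dual (m+4) L" by blast
  have "self_dual m (B.psi L)" by (rule B.psi_self_dual[OF L])
  then have "{M::(nat\<Rightarrow>'a) set. self_dual m M} \<noteq> {}" by auto
  then show ?thesis unfolding G_def using finite_sdg[of m, where 'a='a] by simp
qed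

lemma G_2mod4_N:
  assumes n: "\<not> (\<exists>a::'a::{finite,field}. a * a = -1)"
  shows "num_sd (F::'a itself) (4*j+2) = 0"
proof (induction j)
  case 0
  have "{M::(nat\<Rightarrow>'a) set. self_dual 2 M} = {}" by (rule no_sqrt_neg1_sd2[OF n])
  then have "num_sd F 2 = 0" by (simp only: G_def card.empty)
  then show ?case by (simp add: numeral_2_eq_2)
next
  case (Suc j)
  have eq: "4 * Suc j + 2 = (4*j+2) + 4" by simp
  have "num_sd F ((4*j+2)+4) = 0" using propN[OF n, where m="4*j+2" and F=F] Suc.IH by blast
  then show ?case by (simp only: eq)
qed

lemma chainN:
  assumes n: "\<not> (\<exists>a::'a::{finite,field}. a * a = -1)"
  shows "num_sd (F::'a itself) (2*k2) * card (UNIV::'a set) ^ (\<Sum>l<i. 2*k2 + 4*l) \<le> num_sd F (2*(k2+2*i))"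
proof (induction i)
  case 0 then show ?case by simp
next
  case (Suc i)
  let ?q = "card (UNIV::'a set)"
  have "num_sd F (2*k2) * ?q ^ (\<Sum>l<Suc i. 2*k2 + 4*l) = (num_sd F (2*k2) * ?q ^ (\<Sum>l<i. 2*k2 + 4*l)) * ?q ^ (2*k2 + 4*i)"
    by (simp add: power_add algebra_simps)
  also have "\<dots> \<le> num_sd F (2*(k2+2*i)) * ?q ^ (2*k2 + 4*i)" using Suc by simp
  also have "\<dots> \<le> num_sd F (2*(k2+2*i)+4)"
  proof -
    have "2*k2 + 4*i = 2*(k2+2*i)" by simp
    then show ?thesis using stepN[OF n, where m="2*(k2+2*i)" and F=F] by simp
  qed
  also have "2*(k2+2*i)+4 = 2*(k2+2*Suc i)" by simp
  finally show ?case .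
qed

lemma chain_commonN:
  assumes n: "\<not> (\<exists>a::'a::{finite,field}. a * a = -1)" and k1: "1 \<le> k1" and k12: "k1 \<le> k2"
  shows "num_sd (F::'a itself) (2*k1) * num_sd F (2*k2) * card (UNIV::'a set) ^ (k1*k2 + (\<Sum>j<k1. j))
          \<le> num_sd F (2*k1) * num_sd F (2*(k1+k2)) * card (UNIV::'a set) ^ k1"
proof (cases "even k1")
  case False
  then obtain j where "k1 = 2*j+1" by (metis oddE)
  then have "2*k1 = 4*j+2" by simp
  then have "num_sd F (2*k1) = 0" using G_2mod4_N[OF n] by simp
  then show ?thesis by simp
next
  case True
  let ?q = "card (UNIV::'a set)"
  obtain i where i: "k1 = 2*i" using True by blast
  have T1: "2 * (\<Sum>j<k1. j) = k1 * (k1 - 1)" by (rule T_sum)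
  have T2: "2 * (\<Sum>l<i. l) = i * (i - 1)" by (rule T_sum)
  have E: "(\<Sum>l<i. 2*k2 + 4*l) = 2*i*k2 + 4 * (\<Sum>l<i. l)"
    by (simp add: sum.distrib sum_distrib_left[symmetric])
  have ex: "k1*k2 + (\<Sum>j<k1. j) \<le> (\<Sum>l<i. 2*k2 + 4*l) + k1"
  proof -
    have "2 * (k1*k2 + (\<Sum>j<k1. j)) = 2*k1*k2 + k1*(k1-1)" using T1 by simp
    also have "\<dots> \<le> 2 * ((\<Sum>l<i. 2*k2 + 4*l) + k1)"
    proof -
      have "2 * ((\<Sum>l<i. 2*k2 + 4*l) + k1) = 4*i*k2 + 4 * (i * (i - 1)) + 4 * i"
        using E T2 i by simp
      moreover have "2*k1*k2 + k1*(k1-1) = 4*i*k2 + 2*i*(2*i - 1)" using i by simp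
      moreover have "2*i*(2*i - 1) \<le> 4 * (i * (i - 1)) + 4 * i"
        by (cases i) (auto simp: algebra_simps)
      ultimately show ?thesis by simp
    qed
    finally show ?thesis by simp
  qed
  have "num_sd F (2*k1) * num_sd F (2*k2) * ?q ^ (k1*k2 + (\<Sum>j<k1. j)) \<le>
        num_sd F (2*k1) * num_sd F (2*k2) * ?q ^ ((\<Sum>l<i. 2*k2 + 4*l) + k1)"
    using card_UNIV_ge2[where 'a='a] ex by (intro mult_le_mono2 power_increasing) auto
  also have "\<dots> = num_sd F (2*k1) * (num_sd F (2*k2) * ?q ^ (\<Sum>l<i. 2*k2 + 4*l)) * ?q ^ k1"
    by (simp add: power_add algebra_simps)
  also have "\<dots> \<le> num_sd F (2*k1) * num_sd F (2*(k2+2*i)) * ?q ^ k1"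
    using chainN[OF n, of F k2 i] by simp
  finally show ?thesis using i by (simp add: add.commute)
qed

lemma chain_common:
  assumes k1: "1 \<le> k1" and k12: "k1 \<le> k2"
  shows "num_sd (F::'a::{finite,field} itself) (2*k1) * num_sd F (2*k2) * card (UNIV::'a set) ^ (k1*k2 + (\<Sum>j<k1. j))
          \<le> num_sd F (2*k1) * num_sd F (2*(k1+k2)) * card (UNIV::'a set) ^ k1"
proof (cases "\<exists>a::'a. a * a = -1")
  case True
  then obtain a :: 'a where "a * a = -1" by blast
  then show ?thesis using chain_commonS k1 k12 by blast
next
  case False
  then show ?thesis using chain_commonN k1 k12 by blast
qed



definition yk :: "real \<Rightarrow> nat \<Rightarrow> real" where
  "yk q k = 16 * real k ^ 2 * q ^ 3 / q ^ (k div 4)"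

lemma exp_ineq:
  fixes k k1 :: nat
  assumes k1: "1 \<le> k1" and kk: "2 * k1 \<le> k"
  shows "k1 * k1 + 2 * k1 + (k div 4) * k1 \<le> 3 * k1 + (k1 * (k - k1) + (\<Sum>j<k1. j))"
proof -
  let ?D = "k div 4" and ?k2 = "k - k1" and ?T = "\<Sum>j<k1. j"
  have T: "2 * ?T = k1 * (k1 - 1)" by (rule T_sum)
  have T': "2 * ?T + k1 = k1 * k1"
  proof -
    have "k1 * (k1 - 1) + k1 = k1 * k1" using k1 by (cases k1) auto
    then show ?thesis using T by simp
  qed
  have D: "4 * ?D \<le> k" by simp
  have h1: "k1 + 2 * ?D \<le> 1 + 2 * ?k2" using D kk by simp
  have h2: "k1 * (k1 + 2 * ?D) \<le> k1 * (1 + 2 * ?k2)" by (rule mult_le_mono2[OF h1])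
  have h3: "k1 * k1 + 2 * (?D * k1) \<le> k1 + 2 * (k1 * ?k2)" using h2 by (simp add: algebra_simps)
  show ?thesis using h3 T' by linarith
qed

lemma term_bound:
  fixes g :: "nat \<Rightarrow> real" and q :: real
  assumes q2: "2 \<le> q" and g0: "\<And>n. 0 \<le> g n"
    and gup: "\<And>k. g (2*k) \<le> 4^k * q^(k*k+k)"
    and chain: "\<And>k1 k2. 1 \<le> k1 \<Longrightarrow> k1 \<le> k2 \<Longrightarrow>
        g (2*k1) * g (2*k2) * q ^ (k1*k2 + (\<Sum>j<k1. j)) \<le> g (2*k1) * g (2*(k1+k2)) * q ^ k1"
    and k1: "1 \<le> k1" and kk: "2 * k1 \<le> k"
  shows "real (2*k choose (2*k1)) * (g (2*k1) * g (2*k - 2*k1)) \<le> g (2*k) * yk q k ^ k1"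
proof -
  define k2 where "k2 = k - k1"
  define E where "E = k1 * k2 + (\<Sum>j<k1. j)"
  define D where "D = k div 4"
  have q0: "0 < q" using q2 by simp
  have k12: "k1 \<le> k2" unfolding k2_def using kk by simp
  have kk2: "k1 + k2 = k" unfolding k2_def using kk by simp
  have e2: "2*k - 2*k1 = 2*k2" unfolding k2_def by simp
  have ch: "g (2*k1) * g (2*k2) * q ^ E \<le> g (2*k1) * g (2*k) * q ^ k1"
    using chain[OF k1 k12] kk2 unfolding E_def by simp
  also have "\<dots> \<le> (4^k1 * q^(k1*k1+k1)) * g (2*k) * q ^ k1"
    using gup[of k1] g0 q0 by (intro mult_right_mono) (auto intro: mult_right_mono)
  also have "\<dots> = 4^k1 * g (2*k) * q^(k1*k1+2*k1)"
  proof -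
    have "k1*k1+2*k1 = (k1*k1+k1) + k1" by simp
    then have "q^(k1*k1+2*k1) = q^(k1*k1+k1) * q^k1" by (simp only: power_add)
    then show ?thesis by (simp add: algebra_simps)
  qed
  finally have A: "g (2*k1) * g (2*k2) * q ^ E \<le> 4^k1 * g (2*k) * q^(k1*k1+2*k1)" .
  have ex: "k1*k1 + 2*k1 + D*k1 \<le> 3*k1 + E" unfolding D_def E_def k2_def by (rule exp_ineq[OF k1 kk])
  have B: "q^(k1*k1+2*k1) * q^(D*k1) \<le> q^(3*k1) * q^E"
    unfolding power_add[symmetric] using q2 ex by (intro power_increasing) auto
  have "g (2*k1) * g (2*k2) * q ^ E * q ^ (D*k1) \<le> 4^k1 * g (2*k) * q^(k1*k1+2*k1) * q ^ (D*k1)"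
    using A q0 by (intro mult_right_mono) auto
  also have "\<dots> \<le> 4^k1 * g (2*k) * (q^(3*k1) * q^E)"
    using B g0[of "2*k"] by (simp add: mult.assoc mult_left_mono)
  finally have C: "g (2*k1) * g (2*k2) * q ^ (D*k1) \<le> 4^k1 * g (2*k) * q^(3*k1)"
    using q0 by (simp add: algebra_simps)
  have bin: "real (2*k choose (2*k1)) \<le> (2 * real k) ^ (2*k1)"
  proof -
    have "2*k choose (2*k1) \<le> (2*k) ^ (2*k1)" by (rule binomial_le_pow) (use kk in simp)
    then show ?thesis by (metis of_nat_le_iff of_nat_mult of_nat_numeral of_nat_power)
  qed
  have gg0: "0 \<le> g (2*k1) * g (2*k2)" using g0 by simp
  have "real (2*k choose (2*k1)) * (g (2*k1) * g (2*k2)) \<le> (2 * real k) ^ (2*k1) * (g (2*k1) * g (2*k2))"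
    using bin gg0 by (rule mult_right_mono)
  also have "\<dots> \<le> (2 * real k) ^ (2*k1) * (4^k1 * g (2*k) * q^(3*k1) / q ^ (D*k1))"
    using C q0 by (intro mult_left_mono) (auto simp: field_simps)
  also have "\<dots> = g (2*k) * ((2 * real k)^2 * 4 * q^3 / q^D) ^ k1"
  proof -
    have p1: "(2 * real k) ^ (2*k1) = ((2 * real k)^2)^k1" by (simp add: power_mult)
    have p2: "q^(3*k1) = (q^3)^k1" by (simp add: power_mult)
    have p3: "q^(D*k1) = (q^D)^k1" by (simp add: power_mult mult.commute)
    have p4: "((2 * real k)^2 * 4 * q^3 / q^D) ^ k1 = ((2 * real k)^2)^k1 * 4^k1 * (q^3)^k1 / (q^D)^k1"
      by (simp only: power_mult_distrib power_divide)
    show ?thesis unfolding p1 p2 p3 p4 by simp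
  qed
  also have "(2 * real k)^2 * 4 * q^3 / q^D = yk q k" unfolding yk_def D_def by (simp add: power2_eq_square)
  finally show ?thesis using e2 by simp
qed

lemma yk_nonneg: "0 < q \<Longrightarrow> 0 \<le> yk q k" unfolding yk_def by simp

lemma term_sym:
  fixes g :: "nat \<Rightarrow> real" and q :: real
  assumes q2: "2 \<le> q" and g0: "\<And>n. 0 \<le> g n"
    and gup: "\<And>k. g (2*k) \<le> 4^k * q^(k*k+k)"
    and chain: "\<And>k1 k2. 1 \<le> k1 \<Longrightarrow> k1 \<le> k2 \<Longrightarrow>
        g (2*k1) * g (2*k2) * q ^ (k1*k2 + (\<Sum>j<k1. j)) \<le> g (2*k1) * g (2*(k1+k2)) * q ^ k1"
    and k1: "k1 \<in> {1..<k}"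
  shows "real (2*k choose (2*k1)) * (g (2*k1) * g (2*k - 2*k1)) \<le> g (2*k) * (yk q k ^ k1 + yk q k ^ (k - k1))"
proof -
  have y0: "0 \<le> yk q k" using q2 by (intro yk_nonneg) simp
  have gk: "0 \<le> g (2*k)" by (rule g0)
  show ?thesis
  proof (cases "2 * k1 \<le> k")
    case True
    have "real (2*k choose (2*k1)) * (g (2*k1) * g (2*k - 2*k1)) \<le> g (2*k) * yk q k ^ k1"
      using term_bound[OF q2 g0 gup chain, of k1 k] k1 True by auto
    also have "\<dots> \<le> g (2*k) * (yk q k ^ k1 + yk q k ^ (k - k1))"
      using y0 gk by (intro mult_left_mono) auto
    finally show ?thesis .
  next
    case False
    define k1' where "k1' = k - k1"
    have k1': "1 \<le> k1'" "2 * k1' \<le> k" using k1 False unfolding k1'_def by auto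
    have "real (2*k choose (2*k1')) * (g (2*k1') * g (2*k - 2*k1')) \<le> g (2*k) * yk q k ^ k1'"
      using term_bound[OF q2 g0 gup chain k1'] .
    moreover have "2*k choose (2*k1) = 2*k choose (2*k1')"
      using binomial_symmetric[of "2*k1" "2*k"] k1 unfolding k1'_def by (simp add: diff_mult_distrib2)
    moreover have "2*k - 2*k1' = 2*k1" "2*k - 2*k1 = 2*k1'" using k1 unfolding k1'_def by auto
    ultimately have "real (2*k choose (2*k1)) * (g (2*k1) * g (2*k - 2*k1)) \<le> g (2*k) * yk q k ^ (k - k1)"
      unfolding k1'_def by (simp add: mult.commute)
    also have "\<dots> \<le> g (2*k) * (yk q k ^ k1 + yk q k ^ (k - k1))"
      using y0 gk by (intro mult_left_mono) auto
    finally show ?thesis .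
  qed
qed

lemma sum_even:
  fixes f :: "nat \<Rightarrow> real"
  assumes "\<And>n. odd n \<Longrightarrow> f n = 0"
  shows "(\<Sum>n1\<in>{1..<2*k}. f n1) = (\<Sum>k1\<in>{1..<k}. f (2*k1))"
proof -
  have S: "(\<lambda>k1. 2*k1) ` {1..<k} \<subseteq> {1..<2*k}" by auto
  have "(\<Sum>n1\<in>{1..<2*k}. f n1) = (\<Sum>n1\<in>(\<lambda>k1. 2*k1) ` {1..<k}. f n1)"
  proof (rule sum.mono_neutral_right[OF _ S])
    show "finite {1..<2*k}" by simp
    show "\<forall>i\<in>{1..<2 * k} - (\<lambda>k1. 2 * k1) ` {1..<k}. f i = 0"
    proof
      fix i assume i: "i \<in> {1..<2 * k} - (\<lambda>k1. 2 * k1) ` {1..<k}"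
      have "odd i"
      proof
        assume "even i"
        then obtain j where "i = 2*j" by blast
        then show False using i by auto
      qed
      then show "f i = 0" by (rule assms)
    qed
  qed
  also have "\<dots> = (\<Sum>k1\<in>{1..<k}. f (2*k1))" by (subst sum.reindex) (auto simp: inj_on_def)
  finally show ?thesis .
qed

lemma geom_half:
  fixes y :: real
  assumes y0: "0 \<le> y" and y1: "y \<le> 1/2"
  shows "(\<Sum>j\<in>{1..<k}. y ^ j) \<le> 2 * y"
proof (cases k)
  case 0 then show ?thesis using y0 by simp
next
  case (Suc k')
  have S0: "0 \<le> (\<Sum>j\<in>{1..<k}. y ^ j)" using y0 by (intro sum_nonneg) auto
  have A: "1 - y^k = (1 - y) * (\<Sum>i<k. y^i)" by (rule one_diff_power_eq)
  have B: "(\<Sum>i<k. y^i) = 1 + (\<Sum>j\<in>{1..<k}. y ^ j)"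
  proof -
    have "(\<Sum>i<k. y^i) = (\<Sum>i\<in>{0..<k}. y^i)" by (simp add: atLeast0LessThan)
    also have "\<dots> = y^0 + (\<Sum>i\<in>{Suc 0..<k}. y^i)" by (rule sum.atLeast_Suc_lessThan) (simp add: Suc)
    finally show ?thesis by simp
  qed
  have yk0: "0 \<le> y^k" using y0 by simp
  have "(1 - y) * (1 + (\<Sum>j\<in>{1..<k}. y ^ j)) \<le> 1" using A B yk0 by simp
  hence "(\<Sum>j\<in>{1..<k}. y ^ j) - y * (\<Sum>j\<in>{1..<k}. y ^ j) \<le> y" by (simp add: algebra_simps)
  moreover have "y * (\<Sum>j\<in>{1..<k}. y ^ j) \<le> (1/2) * (\<Sum>j\<in>{1..<k}. y ^ j)"
    using y1 S0 by (rule mult_right_mono)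
  ultimately show ?thesis by simp
qed

lemma sum_refl:
  "(\<Sum>k1\<in>{1..<k}. (y::real) ^ (k - k1)) = (\<Sum>j\<in>{1..<k}. y ^ j)"
proof (rule sum.reindex_bij_betw)
  show "bij_betw (\<lambda>k1. k - k1) {1..<k} {1..<k}"
    by (rule bij_betw_byWitness[where f'="\<lambda>j. k - j"]) auto
qed

lemma Dc_bound:
  fixes g Dc :: "nat \<Rightarrow> real" and q :: real
  assumes q2: "2 \<le> q" and g0: "\<And>n. 0 \<le> g n" and godd: "\<And>n. odd n \<Longrightarrow> g n = 0"
    and gup: "\<And>k. g (2*k) \<le> 4^k * q^(k*k+k)"
    and chain: "\<And>k1 k2. 1 \<le> k1 \<Longrightarrow> k1 \<le> k2 \<Longrightarrow>
        g (2*k1) * g (2*k2) * q ^ (k1*k2 + (\<Sum>j<k1. j)) \<le> g (2*k1) * g (2*(k1+k2)) * q ^ k1"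
    and Dcb: "\<And>n. Dc n \<le> (\<Sum>n1\<in>{1..<n}. real (n choose n1) * (g n1 * g (n - n1)))"
    and y: "yk q k \<le> 1/2"
  shows "Dc (2*k) \<le> 4 * yk q k * g (2*k)"
proof -
  have y0: "0 \<le> yk q k" using q2 by (intro yk_nonneg) simp
  have "Dc (2*k) \<le> (\<Sum>n1\<in>{1..<2*k}. real (2*k choose n1) * (g n1 * g (2*k - n1)))" by (rule Dcb)
  also have "\<dots> = (\<Sum>k1\<in>{1..<k}. real (2*k choose (2*k1)) * (g (2*k1) * g (2*k - 2*k1)))"
    by (rule sum_even) (simp add: godd)
  also have "\<dots> \<le> (\<Sum>k1\<in>{1..<k}. g (2*k) * (yk q k ^ k1 + yk q k ^ (k - k1)))"
    by (rule sum_mono) (rule term_sym[OF q2 g0 gup chain])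
  also have "\<dots> = g (2*k) * (\<Sum>k1\<in>{1..<k}. yk q k ^ k1 + yk q k ^ (k - k1))"
    by (simp add: sum_distrib_left)
  also have "\<dots> = g (2*k) * (2 * (\<Sum>j\<in>{1..<k}. yk q k ^ j))"
  proof -
    have "(\<Sum>k1\<in>{1..<k}. yk q k ^ k1 + yk q k ^ (k - k1)) = 2 * (\<Sum>j\<in>{1..<k}. yk q k ^ j)"
      unfolding sum.distrib sum_refl by simp
    then show ?thesis by simp
  qed
  also have "\<dots> \<le> g (2*k) * (2 * (2 * yk q k))"
    using geom_half[OF y0 y, of k] g0[of "2*k"] by (intro mult_left_mono) auto
  finally show ?thesis by (simp add: algebra_simps)
qed

lemma yk_bound:
  fixes q :: real
  assumes q2: "2 \<le> q"
  shows "yk q (n div 2) \<le> 32 * q^3 * (real n ^ 2 / 2 powr (real n / 8))"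
proof -
  define k where "k = n div 2"
  define m where "m = k div 4"
  have mn: "m = n div 8" unfolding m_def k_def by (simp add: div_mult2_eq)
  have "n < 8 * m + 8" unfolding mn by simp
  hence m1: "real n / 8 - 1 \<le> real m" by simp
  have "2 powr (real n / 8 - 1) \<le> 2 powr real m" by (rule powr_mono[OF m1]) simp
  moreover have "2 powr (real n / 8 - 1) = 2 powr (real n / 8) / 2" by (simp add: powr_diff)
  moreover have "2 powr real m = (2::real) ^ m" by (simp add: powr_realpow)
  moreover have "(2::real) ^ m \<le> q ^ m" using q2 by (intro power_mono) auto
  ultimately have qm: "2 powr (real n / 8) / 2 \<le> q ^ m" by simp
  have pos: "0 < 2 powr (real n / 8) / 2" by simp
  have kn: "real k ^ 2 \<le> real n ^ 2" unfolding k_def by (intro power_mono) auto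
  have q3: "0 \<le> q^3" using q2 by simp
  have "yk q k = 16 * real k ^ 2 * q ^ 3 / q ^ m" unfolding yk_def m_def ..
  also have "\<dots> \<le> 16 * real n ^ 2 * q ^ 3 / (2 powr (real n / 8) / 2)"
    using kn q3 qm pos by (intro frac_le mult_right_mono mult_left_mono) auto
  also have "\<dots> = 32 * q^3 * (real n ^ 2 / 2 powr (real n / 8))" by (simp add: field_simps)
  finally show ?thesis unfolding k_def .
qed

lemma abstract_main:
  fixes g Dc :: "nat \<Rightarrow> real" and q :: real
  assumes q2: "2 \<le> q" and g0: "\<And>n. 0 \<le> g n" and godd: "\<And>n. odd n \<Longrightarrow> g n = 0"
    and gup: "\<And>k. g (2*k) \<le> 4^k * q^(k*k+k)"
    and chain: "\<And>k1 k2. 1 \<le> k1 \<Longrightarrow> k1 \<le> k2 \<Longrightarrow>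
        g (2*k1) * g (2*k2) * q ^ (k1*k2 + (\<Sum>j<k1. j)) \<le> g (2*k1) * g (2*(k1+k2)) * q ^ k1"
    and Dc0: "\<And>n. 0 \<le> Dc n"
    and Dcb: "\<And>n. Dc n \<le> (\<Sum>n1\<in>{1..<n}. real (n choose n1) * (g n1 * g (n - n1)))"
  shows "((\<lambda>n. (g n - Dc n) / g n) \<longlongrightarrow> 1) (inf sequentially (principal {n. even n \<and> g n \<noteq> 0}))"
proof -
  let ?F = "inf sequentially (principal {n. even n \<and> g n \<noteq> 0})"
  define v where "v = (\<lambda>n. 128 * q^3 * (real n ^ 2 / 2 powr (real n / 8)))"
  have lim0: "(\<lambda>n::nat. real n ^ 2 / 2 powr (real n / 8)) \<longlonglongrightarrow> 0" by real_asymp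
  have vlim: "v \<longlonglongrightarrow> 0" unfolding v_def using tendsto_mult[OF tendsto_const lim0, of "128 * q^3"] by simp
  have ev: "eventually (\<lambda>n. v n < 2) sequentially" using order_tendstoD(2)[OF vlim] by simp
  have evF: "eventually (\<lambda>n. 1 - v n \<le> (g n - Dc n) / g n \<and> (g n - Dc n) / g n \<le> 1) ?F"
    unfolding eventually_inf_principal
  proof (rule eventually_mono[OF eventually_conj[OF ev eventually_ge_at_top[of 1]]], intro impI)
    fix n :: nat assume n: "v n < 2 \<and> 1 \<le> n" and P: "n \<in> {n. even n \<and> g n \<noteq> 0}"
    obtain k where k: "n = 2 * k" using P by blast
    have gpos: "0 < g n" using P g0[of n] by auto
    have "yk q k \<le> 32 * q^3 * (real n ^ 2 / 2 powr (real n / 8))" using yk_bound[OF q2, of n] k by simp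
    also have "\<dots> = v n / 4" unfolding v_def by simp
    finally have yv: "yk q k \<le> v n / 4" .
    hence y: "yk q k \<le> 1/2" using n by simp
    have "Dc n \<le> 4 * yk q k * g n" using Dc_bound[OF q2 g0 godd gup chain Dcb y] k by simp
    also have "\<dots> \<le> v n * g n" using yv gpos by (intro mult_right_mono) auto
    finally have D: "Dc n \<le> v n * g n" .
    have "1 - v n \<le> (g n - Dc n) / g n" using D gpos by (simp add: field_simps)
    moreover have "(g n - Dc n) / g n \<le> 1" using Dc0[of n] gpos by (simp add: field_simps)
    ultimately show "1 - v n \<le> (g n - Dc n) / g n \<and> (g n - Dc n) / g n \<le> 1" by simp
  qed
  have l1: "((\<lambda>n. 1 - v n) \<longlongrightarrow> 1) ?F"
    by (rule tendsto_mono[OF inf_le1]) (use tendsto_diff[OF tendsto_const vlim, of 1] in simp)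
  show ?thesis
    by (rule tendsto_sandwich[OF eventually_mono[OF evF] eventually_mono[OF evF] l1 tendsto_const]) auto
qed



theorem mainTheorem10:
  fixes F :: "'a::{finite,field} itself"
  shows "filterlim (\<lambda>n. real (num_indec_sd F n) / real (num_sd F n)) (nhds 1)
           (inf sequentially (principal {n. even n \<and> num_sd F n \<noteq> 0}))"
proof -
  let ?q = "real (card (UNIV::'a set))"
  define g where "g = (\<lambda>n. real (num_sd F n))"
  define Dc where "Dc = (\<lambda>n. real (card {C::(nat\<Rightarrow>'a) set. self_dual n C \<and> decomposable n C}))"
  have indec: "real (num_indec_sd F n) = g n - Dc n" for n
  proof -
    have sub: "{C::(nat\<Rightarrow>'a) set. self_dual n C \<and> decomposable n C} \<subseteq> {C. self_dual n C}" by auto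
    have "{C::(nat\<Rightarrow>'a) set. self_dual n C \<and> indecomposable n C} =
          {C. self_dual n C} - {C. self_dual n C \<and> decomposable n C}"
      unfolding indecomposable_def by auto
    hence "num_indec_sd F n = num_sd F n - card {C::(nat\<Rightarrow>'a) set. self_dual n C \<and> decomposable n C}"
      unfolding num_indec_sd_def num_sd_def using card_Diff_subset[OF finite_subset[OF sub finite_sdg] sub] by simp
    moreover have "card {C::(nat\<Rightarrow>'a) set. self_dual n C \<and> decomposable n C} \<le> num_sd F n"
      unfolding num_sd_def by (rule card_mono[OF finite_sdg sub])
    ultimately show ?thesis unfolding g_def Dc_def by (simp add: of_nat_diff)
  qed
  have q2: "2 \<le> ?q" using card_UNIV_ge2[where 'a='a] by simp
  have g0: "0 \<le> g n" for n unfolding g_def by simp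
  have godd: "odd n \<Longrightarrow> g n = 0" for n unfolding g_def using G_odd[of n F] by simp
  have gup: "g (2*k) \<le> 4^k * ?q^(k*k+k)" for k
  proof -
    have "real (num_sd F (2*k)) \<le> real (4^k * card (UNIV::'a set) ^ (k*k+k))"
      using G_up[of F k] by (rule of_nat_mono)
    then show ?thesis unfolding g_def by simp
  qed
  have chain: "g (2*k1) * g (2*k2) * ?q ^ (k1*k2 + (\<Sum>j<k1. j)) \<le> g (2*k1) * g (2*(k1+k2)) * ?q ^ k1"
    if "1 \<le> k1" "k1 \<le> k2" for k1 k2
  proof -
    have "real (num_sd F (2*k1) * num_sd F (2*k2) * card (UNIV::'a set) ^ (k1*k2 + (\<Sum>j<k1. j)))
          \<le> real (num_sd F (2*k1) * num_sd F (2*(k1+k2)) * card (UNIV::'a set) ^ k1)"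
      using chain_common[OF that, of F] by (rule of_nat_mono)
    then show ?thesis unfolding g_def by simp
  qed
  have Dc0: "0 \<le> Dc n" for n unfolding Dc_def by simp
  have Dcb: "Dc n \<le> (\<Sum>n1\<in>{1..<n}. real (n choose n1) * (g n1 * g (n - n1)))" for n
  proof -
    have "Dc n \<le> real (\<Sum>k\<in>{1..<n}. (n choose k) * (card {M::(nat\<Rightarrow>'a) set. self_dual k M} *
                     card {M::(nat\<Rightarrow>'a) set. self_dual (n-k) M}))"
      unfolding Dc_def by (rule of_nat_mono[OF dec_count])
    then show ?thesis unfolding g_def num_sd_def by simp
  qed
  have "((\<lambda>n. (g n - Dc n) / g n) \<longlongrightarrow> 1) (inf sequentially (principal {n. even n \<and> g n \<noteq> 0}))"
    by (rule abstract_main[OF q2 g0 godd gup chain Dc0 Dcb])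
  moreover have "{n. even n \<and> g n \<noteq> 0} = {n. even n \<and> num_sd F n \<noteq> 0}" unfolding g_def by simp
  moreover have "(\<lambda>n. real (num_indec_sd F n) / real (num_sd F n)) = (\<lambda>n. (g n - Dc n) / g n)"
    by (rule ext) (simp only: indec g_def)
  ultimately show ?thesis by simp
qed

end
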